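(* Let $\widehat M$ be a cooperative Markov game with underlying MMDP $M$, let $(S_{target},S_{avoid})$ be a reach-avoid objective, and let $\pi=(\pi_{comm},\pi_{act})\in\Pi^{pos}_{comm}(\mathcal O,K)\times\Pi^{pos}_{act}(M)$. Assume $\sum_{t\ge1}H_t<\infty$. Then $$\mathbb P_{M_{\pi_{act}}}\big((\neg S_{avoid})\,\mathcal U\,S_{target}\big)-\mathbb P_{\widehat M_{\pi}}\big((\neg S_{avoid})\,\mathcal U\,S_{target}\big)\;\le\;\sqrt{1-\exp\big(-D_{(\pi_{comm},\pi_{act})}\big)} ,$$ where the right-hand side is read as $1$ if $D_{(\pi_{comm},\pi_{act})}=+\infty$.
   Context: MMDP: there are $N\ge1$ agents, identified with $[N]=\{1,\dots,N\}$. Agent $i$ has a finite local state set $\mathcal S^i$, finite local action set $\mathcal A^i$, local transition function $P^i:\mathcal S^i\times\mathcal A^i\to\Delta(\mathcal S^i)$ and initial local state $s^i_{init}$. Joint states $\mathcal S=\prod_i\mathcal S^i$, joint actions $\mathcal A=\prod_i\mathcal A^i$, joint transitions $P(s,a)(u)=\prod_{i}P^i(s^i,a^i)(u^i)$, initial state $s_{init}=(s^1_{init},\dots,s^N_{init})$. A positional joint action policy is a map $\pi_{act}:\mathcal S\to\Delta(\mathcal A)$; $\Pi^{pos}_{act}(M)$ is the set of these. Cooperative Markov game $\widehat M=(M,\mathcal O^1,\dots,\mathcal O^N,\mathcal L^1,\dots,\mathcal L^N,K)$: each $\mathcal S^i=\mathcal O^i\times\mathcal L^i$ (public part $o^i$,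 local part $l^i$); $\mathcal O=\prod_i\mathcal O^i$, $\mathcal L=\prod_i\mathcal L^i$, and a joint state is written $s=(o,l)$. For $c\subseteq[N]$, $\mathcal O^c=\prod_{j\in c}\mathcal O^j$, $\mathcal L^c=\prod_{j\in c}\mathcal L^j$, $\mathcal A^c=\prod_{j\in c}\mathcal A^j$, and $o^c,l^c,a^c$ denote restrictions to coordinates in $c$. $K\in\{0,\dots,N\}$ and $\mathcal A_{comm}$ is the set of subsets of $[N]$ of size $K$ (so $\mathcal A_{comm}=\{\emptyset\}$ if $K=0$). A positional communication policy is a map $\pi_{comm}:\mathcal O\to\Delta(\mathcal A_{comm})$; $\Pi^{pos}_{comm}(\mathcal O,K)$ is the set of these. Reach-avoid objective: disjoint sets $S_{target},S_{avoid}\subseteq\mathcal S$; put $\mathcal T=S_{target}\cup S_{avoid}$. Full-communication process $M_{\pi_{act}}$: random sequence $S_0=s_{init},A_1,S_1,A_2,S_2,\dots$ with $\mathbb P(A_t=a,S_t=s'\mid S_0,A_1,\dots,S_{t-1}=s)=\pi_{act}(s)(a)P(s,a)(s')$. Write $S_t=(O_t,L_t)$ and $A^c_t,O^c_t,L^c_t$ (resp. $A^i_t,O^i_t,L^i_t$) for components in $c$ (resp. $i$). The process is regarded as stopped upon entering $\mathcal T$: with $E_{t}=\{S_0,\dots,S_{t}\notin\mathcal T\}$, every probability of an event concerning times $t-1,t$ is the probability of that event intersected with $E_{t-1}$, and conditional probabilities condition on the conditioning event intersected with $E_{t-1}$. For $c\subseteq[N]$ and $t\ge1$ let $q^c_t(a^c,o^c_1,l^c_1\mid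 o,l^c)=\mathbb P(A^c_t=a^c,O^c_t=o^c_1,L^c_t=l^c_1\mid O_{t-1}=o,L^c_{t-1}=l^c,E_{t-1})$ (write $q^i_t$ for $c=\{i\}$; arbitrary if the conditioning event has probability $0$). Restricted-communication process $\widehat M_\pi$, $\pi=(\pi_{comm},\pi_{act})$: random sequence $\hat S_0=s_{init},\hat A_1,\hat S_1,\dots$ (stopped upon entering $\mathcal T$) such that for any history ending in $\hat S_{t-1}=(o,l)\notin\mathcal T$, $\mathbb P(\hat A_t=a,\hat S_t=(o_1,l_1)\mid\text{history})=\sum_{c\in\mathcal A_{comm}}\pi_{comm}(o)(c)\,q^c_t(a^c,o^c_1,l^c_1\mid o,l^c)\prod_{i\notin c}q^i_t(a^i,o^i_1,l^i_1\mid o,l^i)$ (the factor for $c=\emptyset$ is $1$). $\mathbb P_{X}((\neg S_{avoid})\mathcal U S_{target})$ for a process $X$ is the probability that some state at time $t$ lies in $S_{target}$ while no state at times $<t$ lies in $S_{avoid}$. Cost: $H_t=H(A_tS_t\mid S_0A_1S_1\dots A_{t-1}S_{t-1})$ is the conditional entropy of the (stopped) full-communication process, i.e. $-\sum_{h}\mathbb P(h\cap E_{t-1})\sum_{a,s'}p_h(a,s')\log p_h(a,s')$ over histories $h$ of length $t-1$, with $p_h$ the conditional law of $(A_t,S_t)$ given $h$. With $w'(o,i)=\sum_{c\in\mathcal A_{comm},\,i\notin c}\pi_{comm}(o)(c)$ and $w''(o,c)=\pi_{comm}(o)(c)$: $G^i=\sum_{t\ge1}\sum_{o\in\mathcal O,l^i\in\mathcal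 L^i}w'(o,i)\,\mathbb P(O_{t-1}=o,L^i_{t-1}=l^i,E_{t-1})\Big(-\sum_{a^i,o^i_1,l^i_1}q^i_t\log q^i_t\Big)$, where $q^i_t=q^i_t(a^i,o^i_1,l^i_1\mid o,l^i)$; $G^c=\sum_{t\ge1}\sum_{o\in\mathcal O,l^c\in\mathcal L^c}w''(o,c)\,\mathbb P(O_{t-1}=o,L^c_{t-1}=l^c,E_{t-1})\Big(-\sum_{a^c,o^c_1,l^c_1}q^c_t\log q^c_t\Big)$; $D_{(\pi_{comm},\pi_{act})}=\sum_{i\in[N]}G^i+\sum_{c\in\mathcal A_{comm}}G^c-\sum_{t\ge1}H_t$. Convention $0\log0=0$. *)

theory Defs
  imports "HOL-Probability.Probability"
begin

text \<open>Agent i has local state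
  set pubS i \<times> locS i (public part o^i, local part l^i), action set acts i,
  local transition function trans i and initial local state (init_o i, init_l i).\<close>

record ('i, 'o, 'l, 'a) cmg =
  agents :: "'i set"
  pubS :: "'i \<Rightarrow> 'o set"
  locS :: "'i \<Rightarrow> 'l set"
  acts :: "'i \<Rightarrow> 'a set"
  trans :: "'i \<Rightarrow> 'o \<times> 'l \<Rightarrow> 'a \<Rightarrow> ('o \<times> 'l) pmf"
  init_o :: "'i \<Rightarrow> 'o"
  init_l :: "'i \<Rightarrow> 'l"
  comm_size :: nat

type_synonym ('i, 'o, 'l) jstate = "('i \<Rightarrow> 'o) \<times> ('i \<Rightarrow> 'l)"
type_synonym ('i, 'o, 'l, 'a) hist = "(('i \<Rightarrow> 'a) \<times> ('i, 'o, 'l) jstate) list"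

definition cmg_wf :: "('i, 'o, 'l, 'a) cmg \<Rightarrow> bool" where
  "cmg_wf G \<longleftrightarrow> finite (agents G) \<and> agents G \<noteq> {} \<and>
     (\<forall>i\<in>agents G. finite (pubS G i) \<and> finite (locS G i) \<and> finite (acts G i)
        \<and> acts G i \<noteq> {} \<and> init_o G i \<in> pubS G i \<and> init_l G i \<in> locS G i
        \<and> (\<forall>ol\<in>pubS G i \<times> locS G i. \<forall>a\<in>acts G i.
               set_pmf (trans G i ol a) \<subseteq> pubS G i \<times> locS G i)) \<and>
     comm_size G \<le> card (agents G)"

definition pubs :: "('i, 'o, 'l, 'a) cmg \<Rightarrow> ('i \<Rightarrow> 'o) set" where
  "pubs G = PiE (agents G) (pubS G)"

definition jstates :: "('i, 'o, 'l, 'a) cmg \<Rightarrow> ('i, 'o, 'l) jstate set" where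
  "jstates G = PiE (agents G) (pubS G) \<times> PiE (agents G) (locS G)"

definition jacts :: "('i, 'o, 'l, 'a) cmg \<Rightarrow> ('i \<Rightarrow> 'a) set" where
  "jacts G = PiE (agents G) (acts G)"

definition comm_acts :: "('i, 'o, 'l, 'a) cmg \<Rightarrow> 'i set set" where
  "comm_acts G = {c. c \<subseteq> agents G \<and> card c = comm_size G}"

definition s_init :: "('i, 'o, 'l, 'a) cmg \<Rightarrow> ('i, 'o, 'l) jstate" where
  "s_init G = (restrict (init_o G) (agents G), restrict (init_l G) (agents G))"

definition jtrans :: "('i, 'o, 'l, 'a) cmg \<Rightarrow> ('i, 'o, 'l) jstate \<Rightarrow> ('i \<Rightarrow> 'a)
    \<Rightarrow> ('i, 'o, 'l) jstate \<Rightarrow> real" where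
  "jtrans G s a s' = (if s' \<in> jstates G then
      (\<Prod>i\<in>agents G. pmf (trans G i (fst s i, snd s i) (a i)) (fst s' i, snd s' i)) else 0)"

definition pos_act_policy :: "('i, 'o, 'l, 'a) cmg \<Rightarrow> (('i, 'o, 'l) jstate \<Rightarrow> ('i \<Rightarrow> 'a) pmf) \<Rightarrow> bool" where
  "pos_act_policy G pa \<longleftrightarrow> (\<forall>s\<in>jstates G. set_pmf (pa s) \<subseteq> jacts G)"

definition pos_comm_policy :: "('i, 'o, 'l, 'a) cmg \<Rightarrow> (('i \<Rightarrow> 'o) \<Rightarrow> 'i set pmf) \<Rightarrow> bool" where
  "pos_comm_policy G pc \<longleftrightarrow> (\<forall>ob\<in>pubs G. set_pmf (pc ob) \<subseteq> comm_acts G)"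

definition reach_avoid_obj :: "('i, 'o, 'l, 'a) cmg \<Rightarrow> ('i, 'o, 'l) jstate set
    \<Rightarrow> ('i, 'o, 'l) jstate set \<Rightarrow> bool" where
  "reach_avoid_obj G St Sa \<longleftrightarrow> St \<subseteq> jstates G \<and> Sa \<subseteq> jstates G \<and> St \<inter> Sa = {}"

text \<open>Histories of length n: (A_1,S_1),...,(A_n,S_n); S_0 is the initial state.\<close>
definition hists :: "('i, 'o, 'l, 'a) cmg \<Rightarrow> nat \<Rightarrow> ('i, 'o, 'l, 'a) hist set" where
  "hists G n = {h. length h = n \<and> set h \<subseteq> jacts G \<times> jstates G}"

definition last_st :: "('i, 'o, 'l) jstate \<Rightarrow> ('i, 'o, 'l, 'a) hist \<Rightarrow> ('i, 'o, 'l) jstate" where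
  "last_st s0 h = (if h = [] then s0 else snd (last h))"

text \<open>fpath G pa T s h = probability that the stopped process started in s produces
  history h; it includes the event that all states before the last one are outside T.\<close>
primrec fpath :: "('i, 'o, 'l, 'a) cmg \<Rightarrow> (('i, 'o, 'l) jstate \<Rightarrow> ('i \<Rightarrow> 'a) pmf)
    \<Rightarrow> ('i, 'o, 'l) jstate set \<Rightarrow> ('i, 'o, 'l) jstate \<Rightarrow> ('i, 'o, 'l, 'a) hist \<Rightarrow> real" where
  "fpath G pa T s [] = 1"
| "fpath G pa T s (x # h) = (if s \<in> T then 0 else
      pmf (pa s) (fst x) * jtrans G s (fst x) (snd x) * fpath G pa T (snd x) h)"

text \<open>P(h \<inter> E_n) for a history h of length n.\<close>
definition fprobE :: "('i, 'o, 'l, 'a) cmg \<Rightarrow> (('i, 'o, 'l) jstate \<Rightarrow> ('i \<Rightarrow> 'a) pmf)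
    \<Rightarrow> ('i, 'o, 'l) jstate set \<Rightarrow> ('i, 'o, 'l, 'a) hist \<Rightarrow> real" where
  "fprobE G pa T h = (if last_st (s_init G) h \<in> T then 0 else fpath G pa T (s_init G) h)"

text \<open>P(O_{t-1} = o, L^c_{t-1} = lc, E_{t-1}).\<close>
definition fmarg :: "('i, 'o, 'l, 'a) cmg \<Rightarrow> (('i, 'o, 'l) jstate \<Rightarrow> ('i \<Rightarrow> 'a) pmf)
    \<Rightarrow> ('i, 'o, 'l) jstate set \<Rightarrow> nat \<Rightarrow> 'i set \<Rightarrow> ('i \<Rightarrow> 'o) \<Rightarrow> ('i \<Rightarrow> 'l) \<Rightarrow> real" where
  "fmarg G pa T t c ob lc = (\<Sum>h\<in>hists G (t - 1).
      (if fst (last_st (s_init G) h) = ob \<and> restrict (snd (last_st (s_init G) h)) c = lc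
       then fprobE G pa T h else 0))"

text \<open>P(A^c_t = ac, O^c_t = oc1, L^c_t = lc1, O_{t-1} = o, L^c_{t-1} = lc, E_{t-1}), for t \<ge> 1.\<close>
definition fjoint :: "('i, 'o, 'l, 'a) cmg \<Rightarrow> (('i, 'o, 'l) jstate \<Rightarrow> ('i \<Rightarrow> 'a) pmf)
    \<Rightarrow> ('i, 'o, 'l) jstate set \<Rightarrow> nat \<Rightarrow> 'i set \<Rightarrow> ('i \<Rightarrow> 'o) \<Rightarrow> ('i \<Rightarrow> 'l)
    \<Rightarrow> ('i \<Rightarrow> 'a) \<times> ('i \<Rightarrow> 'o) \<times> ('i \<Rightarrow> 'l) \<Rightarrow> real" where
  "fjoint G pa T t c ob lc x = (\<Sum>h\<in>hists G t.
      (let s = last_st (s_init G) (butlast h); a = fst (last h); s1 = snd (last h) in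
       if fst s = ob \<and> restrict (snd s) c = lc \<and>
          (restrict a c, restrict (fst s1) c, restrict (snd s1) c) = x
       then fpath G pa T (s_init G) h else 0))"

text \<open>q^c_t(x | o, lc) of the full process (value 0 when the conditioning event is null;
  this value is irrelevant wherever qfull is used below).\<close>
definition qfull :: "('i, 'o, 'l, 'a) cmg \<Rightarrow> (('i, 'o, 'l) jstate \<Rightarrow> ('i \<Rightarrow> 'a) pmf)
    \<Rightarrow> ('i, 'o, 'l) jstate set \<Rightarrow> nat \<Rightarrow> 'i set \<Rightarrow> ('i \<Rightarrow> 'o) \<Rightarrow> ('i \<Rightarrow> 'l)
    \<Rightarrow> ('i \<Rightarrow> 'a) \<times> ('i \<Rightarrow> 'o) \<times> ('i \<Rightarrow> 'l) \<Rightarrow> real" where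
  "qfull G pa T t c ob lc x = fjoint G pa T t c ob lc x / fmarg G pa T t c ob lc"

definition loc_triples :: "('i, 'o, 'l, 'a) cmg \<Rightarrow> 'i set
    \<Rightarrow> (('i \<Rightarrow> 'a) \<times> ('i \<Rightarrow> 'o) \<times> ('i \<Rightarrow> 'l)) set" where
  "loc_triples G c = PiE c (acts G) \<times> PiE c (pubS G) \<times> PiE c (locS G)"

text \<open>Admissible choices of the kernels q^c_t used by the restricted process: they are
  distributions on A^c \<times> O^c \<times> L^c, equal to the conditional law of the full process
  whenever the conditioning event has positive probability, and arbitrary otherwise.\<close>
definition q_admissible :: "('i, 'o, 'l, 'a) cmg \<Rightarrow> (('i, 'o, 'l) jstate \<Rightarrow> ('i \<Rightarrow> 'a) pmf)
    \<Rightarrow> ('i, 'o, 'l) jstate set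
    \<Rightarrow> (nat \<Rightarrow> 'i set \<Rightarrow> ('i \<Rightarrow> 'o) \<Rightarrow> ('i \<Rightarrow> 'l) \<Rightarrow> (('i \<Rightarrow> 'a) \<times> ('i \<Rightarrow> 'o) \<times> ('i \<Rightarrow> 'l)) pmf)
    \<Rightarrow> bool" where
  "q_admissible G pa T q \<longleftrightarrow>
     (\<forall>t\<ge>1. \<forall>c. (c \<in> comm_acts G \<or> (\<exists>i\<in>agents G. c = {i})) \<longrightarrow>
        (\<forall>ob\<in>pubs G. \<forall>lc\<in>PiE c (locS G).
           set_pmf (q t c ob lc) \<subseteq> loc_triples G c \<and>
           (fmarg G pa T t c ob lc > 0 \<longrightarrow> (\<forall>x. pmf (q t c ob lc) x = qfull G pa T t c ob lc x))))"

definition rkernel :: "('i, 'o, 'l, 'a) cmg \<Rightarrow> (('i \<Rightarrow> 'o) \<Rightarrow> 'i set pmf)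
    \<Rightarrow> (nat \<Rightarrow> 'i set \<Rightarrow> ('i \<Rightarrow> 'o) \<Rightarrow> ('i \<Rightarrow> 'l) \<Rightarrow> (('i \<Rightarrow> 'a) \<times> ('i \<Rightarrow> 'o) \<times> ('i \<Rightarrow> 'l)) pmf)
    \<Rightarrow> nat \<Rightarrow> ('i, 'o, 'l) jstate \<Rightarrow> ('i \<Rightarrow> 'a) \<Rightarrow> ('i, 'o, 'l) jstate \<Rightarrow> real" where
  "rkernel G pc q t s a s' = (\<Sum>c\<in>comm_acts G.
      pmf (pc (fst s)) c
      * pmf (q t c (fst s) (restrict (snd s) c))
            (restrict a c, restrict (fst s') c, restrict (snd s') c)
      * (\<Prod>i\<in>agents G - c. pmf (q t {i} (fst s) (restrict (snd s) {i}))
            (restrict a {i}, restrict (fst s') {i}, restrict (snd s') {i})))"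

text \<open>rpath G pc q T t s h: probability of history h when the restricted process is in
  state s at time t-1 (stopped upon entering T).\<close>
primrec rpath :: "('i, 'o, 'l, 'a) cmg \<Rightarrow> (('i \<Rightarrow> 'o) \<Rightarrow> 'i set pmf)
    \<Rightarrow> (nat \<Rightarrow> 'i set \<Rightarrow> ('i \<Rightarrow> 'o) \<Rightarrow> ('i \<Rightarrow> 'l) \<Rightarrow> (('i \<Rightarrow> 'a) \<times> ('i \<Rightarrow> 'o) \<times> ('i \<Rightarrow> 'l)) pmf)
    \<Rightarrow> ('i, 'o, 'l) jstate set \<Rightarrow> nat \<Rightarrow> ('i, 'o, 'l) jstate \<Rightarrow> ('i, 'o, 'l, 'a) hist \<Rightarrow> real" where
  "rpath G pc q T t s [] = 1"
| "rpath G pc q T t s (x # h) = (if s \<in> T then 0 else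
      rkernel G pc q t s (fst x) (snd x) * rpath G pc q T (Suc t) (snd x) h)"

text \<open>For a process stopped upon entering T = St \<union> Sa, the event (\<not> Sa) U St is the
  disjoint union over n of: S_0..S_{n-1} \<notin> T and S_n \<in> St.  Here hp h is the
  probability of the history h of the stopped process.\<close>
definition until_prob :: "('i, 'o, 'l, 'a) cmg \<Rightarrow> (('i, 'o, 'l, 'a) hist \<Rightarrow> real)
    \<Rightarrow> ('i, 'o, 'l) jstate set \<Rightarrow> real" where
  "until_prob G hp St = (\<Sum>n. \<Sum>h\<in>hists G n.
      (if last_st (s_init G) h \<in> St then hp h else 0))"

definition xlogx :: "real \<Rightarrow> real" where
  "xlogx p = (if p = 0 then 0 else p * ln p)"

definition entropy_on :: "('x \<Rightarrow> real) \<Rightarrow> 'x set \<Rightarrow> real" where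
  "entropy_on f X = - (\<Sum>x\<in>X. xlogx (f x))"

text \<open>H_t = H(A_t S_t | S_0 A_1 ... S_{t-1}) for the stopped full process, t \<ge> 1.\<close>
definition Hent :: "('i, 'o, 'l, 'a) cmg \<Rightarrow> (('i, 'o, 'l) jstate \<Rightarrow> ('i \<Rightarrow> 'a) pmf)
    \<Rightarrow> ('i, 'o, 'l) jstate set \<Rightarrow> nat \<Rightarrow> real" where
  "Hent G pa T t = (\<Sum>h\<in>hists G (t - 1).
      fprobE G pa T h *
      entropy_on (\<lambda>x. fpath G pa T (s_init G) (h @ [x]) / fprobE G pa T h) (jacts G \<times> jstates G))"

definition wprime :: "('i, 'o, 'l, 'a) cmg \<Rightarrow> (('i \<Rightarrow> 'o) \<Rightarrow> 'i set pmf) \<Rightarrow> ('i \<Rightarrow> 'o) \<Rightarrow> 'i \<Rightarrow> real" where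
  "wprime G pc ob i = (\<Sum>c\<in>{c\<in>comm_acts G. i \<notin> c}. pmf (pc ob) c)"

definition Gi_term :: "('i, 'o, 'l, 'a) cmg \<Rightarrow> (('i \<Rightarrow> 'o) \<Rightarrow> 'i set pmf)
    \<Rightarrow> (('i, 'o, 'l) jstate \<Rightarrow> ('i \<Rightarrow> 'a) pmf) \<Rightarrow> ('i, 'o, 'l) jstate set \<Rightarrow> 'i \<Rightarrow> nat \<Rightarrow> real" where
  "Gi_term G pc pa T i t = (\<Sum>ob\<in>pubs G. \<Sum>li\<in>PiE {i} (locS G).
      wprime G pc ob i * fmarg G pa T t {i} ob li *
      entropy_on (qfull G pa T t {i} ob li) (loc_triples G {i}))"

definition Gc_term :: "('i, 'o, 'l, 'a) cmg \<Rightarrow> (('i \<Rightarrow> 'o) \<Rightarrow> 'i set pmf)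
    \<Rightarrow> (('i, 'o, 'l) jstate \<Rightarrow> ('i \<Rightarrow> 'a) pmf) \<Rightarrow> ('i, 'o, 'l) jstate set \<Rightarrow> 'i set \<Rightarrow> nat \<Rightarrow> real" where
  "Gc_term G pc pa T c t = (\<Sum>ob\<in>pubs G. \<Sum>lc\<in>PiE c (locS G).
      pmf (pc ob) c * fmarg G pa T t c ob lc *
      entropy_on (qfull G pa T t c ob lc) (loc_triples G c))"

definition Gi :: "('i, 'o, 'l, 'a) cmg \<Rightarrow> (('i \<Rightarrow> 'o) \<Rightarrow> 'i set pmf)
    \<Rightarrow> (('i, 'o, 'l) jstate \<Rightarrow> ('i \<Rightarrow> 'a) pmf) \<Rightarrow> ('i, 'o, 'l) jstate set \<Rightarrow> 'i \<Rightarrow> ennreal" where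
  "Gi G pc pa T i = (\<Sum>t. ennreal (Gi_term G pc pa T i (Suc t)))"

definition Gc :: "('i, 'o, 'l, 'a) cmg \<Rightarrow> (('i \<Rightarrow> 'o) \<Rightarrow> 'i set pmf)
    \<Rightarrow> (('i, 'o, 'l) jstate \<Rightarrow> ('i \<Rightarrow> 'a) pmf) \<Rightarrow> ('i, 'o, 'l) jstate set \<Rightarrow> 'i set \<Rightarrow> ennreal" where
  "Gc G pc pa T c = (\<Sum>t. ennreal (Gc_term G pc pa T c (Suc t)))"

definition Dcost :: "('i, 'o, 'l, 'a) cmg \<Rightarrow> (('i \<Rightarrow> 'o) \<Rightarrow> 'i set pmf)
    \<Rightarrow> (('i, 'o, 'l) jstate \<Rightarrow> ('i \<Rightarrow> 'a) pmf) \<Rightarrow> ('i, 'o, 'l) jstate set \<Rightarrow> ereal" where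
  "Dcost G pc pa T =
     enn2ereal ((\<Sum>i\<in>agents G. Gi G pc pa T i) + (\<Sum>c\<in>comm_acts G. Gc G pc pa T c))
     - ereal (\<Sum>t. Hent G pa T (Suc t))"

end

theory Submission
  imports Defs
begin

primrec gpath :: "(nat \<Rightarrow> 's \<Rightarrow> 'b \<times> 's \<Rightarrow> real) \<Rightarrow> 's set \<Rightarrow> nat \<Rightarrow> 's \<Rightarrow> ('b \<times> 's) list \<Rightarrow> real" where
  "gpath k T t s [] = 1"
| "gpath k T t s (x # h) = (if s \<in> T then 0 else k t s x * gpath k T (Suc t) (snd x) h)"

definition lst :: "'s \<Rightarrow> ('b \<times> 's) list \<Rightarrow> 's" where
  "lst s h = (if h = [] then s else snd (last h))"

lemma lst_Nil[simp]: "lst s [] = s" by (simp add: lst_def)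
lemma lst_Cons[simp]: "lst s (x # h) = lst (snd x) h" by (simp add: lst_def)
lemma lst_snoc[simp]: "lst s (h @ [x]) = snd x" by (simp add: lst_def)

definition lset :: "'x set \<Rightarrow> nat \<Rightarrow> 'x list set" where
  "lset X k = {h. length h = k \<and> set h \<subseteq> X}"

definition Hs :: "'x set \<Rightarrow> nat \<Rightarrow> 'x list set" where
  "Hs X n = {h. length h \<le> n \<and> set h \<subseteq> X}"

lemma finite_lset: "finite X \<Longrightarrow> finite (lset X k)"
  unfolding lset_def using finite_lists_length_eq[of X k] by (simp add: conj_commute)

lemma finite_Hs: "finite X \<Longrightarrow> finite (Hs X k)"
  unfolding Hs_def using finite_lists_length_le[of X k] by (simp add: conj_commute)

lemma lset_0: "lset X 0 = {[]}" by (auto simp: lset_def)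
lemma Hs_0: "Hs X 0 = {[]}" by (auto simp: Hs_def)

lemma lset_Suc: "lset X (Suc k) = (\<lambda>(x,h). x # h) ` (X \<times> lset X k)"
  by (auto simp: lset_def length_Suc_conv image_iff)

lemma lset_Suc_snoc: "lset X (Suc k) = (\<lambda>(h,x). h @ [x]) ` (lset X k \<times> X)"
proof -
  have "\<exists>h' x. h = h' @ [x] \<and> length h' = k \<and> set h' \<subseteq> X \<and> x \<in> X"
    if "length h = Suc k" "set h \<subseteq> X" for h
    using that by (cases h rule: rev_cases) auto
  then show ?thesis by (auto simp: lset_def image_iff; blast)
qed

lemma sum_lset_Suc:
  assumes "finite X"
  shows "(\<Sum>h\<in>lset X (Suc k). f h) = (\<Sum>x\<in>X. \<Sum>h\<in>lset X k. f (x # h))"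
proof -
  have "inj_on (\<lambda>(x,h). x # h) (X \<times> lset X k)" by (auto simp: inj_on_def)
  then have "(\<Sum>h\<in>lset X (Suc k). f h) = (\<Sum>(x,h)\<in>X \<times> lset X k. f (x # h))"
    unfolding lset_Suc by (subst sum.reindex) (auto simp: case_prod_beta)
  also have "\<dots> = (\<Sum>x\<in>X. \<Sum>h\<in>lset X k. f (x # h))"
    by (rule sum.cartesian_product[symmetric])
  finally show ?thesis .
qed

lemma sum_lset_Suc_snoc:
  assumes "finite X"
  shows "(\<Sum>h\<in>lset X (Suc k). f h) = (\<Sum>h\<in>lset X k. \<Sum>x\<in>X. f (h @ [x]))"
proof -
  have "inj_on (\<lambda>(h,x). h @ [x]) (lset X k \<times> X)" by (auto simp: inj_on_def)
  then have "(\<Sum>h\<in>lset X (Suc k). f h) = (\<Sum>(h,x)\<in>lset X k \<times> X. f (h @ [x]))"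
    unfolding lset_Suc_snoc by (subst sum.reindex) (auto simp: case_prod_beta)
  also have "\<dots> = (\<Sum>h\<in>lset X k. \<Sum>x\<in>X. f (h @ [x]))"
    by (rule sum.cartesian_product[symmetric])
  finally show ?thesis .
qed

lemma Hs_Suc: "Hs X (Suc n) = insert [] ((\<lambda>(x,h). x # h) ` (X \<times> Hs X n))"
proof -
  have "h \<in> (\<lambda>(x,h). x # h) ` (X \<times> Hs X n)" if "h \<noteq> []" "length h \<le> Suc n" "set h \<subseteq> X" for h
    using that by (cases h) (auto simp: Hs_def image_iff)
  then show ?thesis by (auto simp: Hs_def)
qed

lemma sum_Hs_Suc:
  assumes "finite X"
  shows "(\<Sum>h\<in>Hs X (Suc n). f h) = f [] + (\<Sum>x\<in>X. \<Sum>h\<in>Hs X n. f (x # h))"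
proof -
  have inj: "inj_on (\<lambda>(x,h). x # h) (X \<times> Hs X n)" by (auto simp: inj_on_def)
  have fin: "finite ((\<lambda>(x,h). x # h) ` (X \<times> Hs X n))"
    using assms finite_Hs by blast
  have "(\<Sum>h\<in>Hs X (Suc n). f h) = f [] + (\<Sum>h\<in>(\<lambda>(x,h). x # h) ` (X \<times> Hs X n). f h)"
    unfolding Hs_Suc by (subst sum.insert) (use fin in auto)
  also have "(\<Sum>h\<in>(\<lambda>(x,h). x # h) ` (X \<times> Hs X n). f h) = (\<Sum>(x,h)\<in>X \<times> Hs X n. f (x # h))"
    using inj by (subst sum.reindex) (auto simp: case_prod_beta)
  also have "\<dots> = (\<Sum>x\<in>X. \<Sum>h\<in>Hs X n. f (x # h))"
    by (rule sum.cartesian_product[symmetric])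
  finally show ?thesis .
qed

lemma Hs_eq_UN: "Hs X n = (\<Union>k\<in>{..<Suc n}. lset X k)"
  by (auto simp: Hs_def lset_def)

lemma gpath_nonneg: "(\<And>t s x. k t s x \<ge> 0) \<Longrightarrow> gpath k T t s h \<ge> 0"
  by (induction h arbitrary: t s) auto

lemma gpath_snoc:
  "gpath k T t s (h @ [x]) = gpath k T t s h * (if lst s h \<in> T then 0 else k (t + length h) (lst s h) x)"
  by (induction h arbitrary: t s) (auto simp: lst_def)

definition stopw :: "(nat \<Rightarrow> 's \<Rightarrow> 'b \<times> 's \<Rightarrow> real) \<Rightarrow> 's set \<Rightarrow> nat \<Rightarrow> nat \<Rightarrow> 's \<Rightarrow> ('b \<times> 's) list \<Rightarrow> real" where
  "stopw k T n t s h = (if length h = n \<or> lst s h \<in> T then gpath k T t s h else 0)"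

lemma stopw_Nil_Suc: "stopw k T (Suc n) t s [] = (if s \<in> T then 1 else 0)"
  by (simp add: stopw_def)

lemma stopw_Cons: "stopw k T (Suc n) t s (x # h) = (if s \<in> T then 0 else k t s x * stopw k T n (Suc t) (snd x) h)"
  by (simp add: stopw_def)

lemma stopw_0: "stopw k T 0 t s [] = 1" by (simp add: stopw_def)

lemma stopw_nonneg: "(\<And>t s x. k t s x \<ge> 0) \<Longrightarrow> stopw k T n t s h \<ge> 0"
  by (simp add: stopw_def gpath_nonneg)

lemma sum_stopw_le:
  assumes fin: "finite X" and nn: "\<And>t s x. k t s x \<ge> 0"
    and XS: "\<And>x. x \<in> X \<Longrightarrow> snd x \<in> S"
    and one: "\<And>t s. s \<in> S \<Longrightarrow> s \<notin> T \<Longrightarrow> (\<Sum>x\<in>X. k t s x) \<le> 1"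
    and s: "s \<in> S"
  shows "(\<Sum>h\<in>Hs X n. stopw k T n t s h) \<le> 1"
  using s
proof (induction n arbitrary: t s)
  case 0 then show ?case by (simp add: Hs_0 stopw_0)
next
  case (Suc n)
  show ?case
  proof (cases "s \<in> T")
    case True
    then show ?thesis by (simp add: sum_Hs_Suc[OF fin] stopw_Nil_Suc stopw_Cons)
  next
    case False
    have "(\<Sum>x\<in>X. \<Sum>h\<in>Hs X n. k t s x * stopw k T n (Suc t) (snd x) h)
        = (\<Sum>x\<in>X. k t s x * (\<Sum>h\<in>Hs X n. stopw k T n (Suc t) (snd x) h))"
      by (simp add: sum_distrib_left)
    also have "\<dots> \<le> (\<Sum>x\<in>X. k t s x * 1)"
      by (intro sum_mono mult_left_mono Suc.IH XS nn)
    also have "\<dots> \<le> 1" using one[OF Suc.prems False] by simp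
    finally show ?thesis using False by (simp add: sum_Hs_Suc[OF fin] stopw_Nil_Suc stopw_Cons)
  qed
qed

lemma sum_stopw_eq:
  assumes fin: "finite X" and nn: "\<And>t s x. k t s x \<ge> 0"
    and XS: "\<And>x. x \<in> X \<Longrightarrow> snd x \<in> S"
    and one: "\<And>t s. s \<in> S \<Longrightarrow> s \<notin> T \<Longrightarrow> (\<Sum>x\<in>X. k t s x) = 1"
    and s: "s \<in> S"
  shows "(\<Sum>h\<in>Hs X n. stopw k T n t s h) = 1"
  using s
proof (induction n arbitrary: t s)
  case 0 then show ?case by (simp add: Hs_0 stopw_0)
next
  case (Suc n)
  show ?case
  proof (cases "s \<in> T")
    case True
    then show ?thesis by (simp add: sum_Hs_Suc[OF fin] stopw_Nil_Suc stopw_Cons)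
  next
    case False
    have "(\<Sum>x\<in>X. \<Sum>h\<in>Hs X n. k t s x * stopw k T n (Suc t) (snd x) h)
        = (\<Sum>x\<in>X. k t s x * (\<Sum>h\<in>Hs X n. stopw k T n (Suc t) (snd x) h))"
      by (simp add: sum_distrib_left)
    also have "\<dots> = (\<Sum>x\<in>X. k t s x * 1)"
      by (intro sum.cong refl arg_cong2[where f="(*)"] Suc.IH XS) 
    also have "\<dots> = 1" using one[OF Suc.prems False] by simp
    finally show ?thesis using False by (simp add: sum_Hs_Suc[OF fin] stopw_Nil_Suc stopw_Cons)
  qed
qed

lemma exp_jensen:
  fixes w y :: "'x \<Rightarrow> real"
  assumes "finite A" "\<And>x. x \<in> A \<Longrightarrow> w x \<ge> 0" "(\<Sum>x\<in>A. w x) = 1"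
  shows "exp (\<Sum>x\<in>A. w x * y x) \<le> (\<Sum>x\<in>A. w x * exp (y x))"
proof -
  define c where "c = (\<Sum>x\<in>A. w x * y x)"
  have "(\<Sum>x\<in>A. w x * exp (y x)) = (\<Sum>x\<in>A. w x * (exp c * exp (y x - c)))"
    by (intro sum.cong refl) (subst mult_exp_exp; simp)
  also have "\<dots> \<ge> (\<Sum>x\<in>A. w x * (exp c * (1 + (y x - c))))"
    by (intro sum_mono mult_left_mono assms(2)) (auto simp: exp_ge_add_one_self)
  also have "(\<Sum>x\<in>A. w x * (exp c * (1 + (y x - c)))) = exp c * ((\<Sum>x\<in>A. w x) + (\<Sum>x\<in>A. w x * y x) - c * (\<Sum>x\<in>A. w x))"
    by (simp add: algebra_simps sum.distrib sum_distrib_left sum_subtractf)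
  also have "\<dots> = exp c" using assms(3) by (simp add: c_def)
  finally show ?thesis by (simp add: c_def)
qed

fun Kf :: "(nat \<Rightarrow> 's \<Rightarrow> 'b \<times> 's \<Rightarrow> real) \<Rightarrow> (nat \<Rightarrow> 's \<Rightarrow> 'b \<times> 's \<Rightarrow> real) \<Rightarrow> 's set
   \<Rightarrow> ('b \<times> 's) set \<Rightarrow> nat \<Rightarrow> nat \<Rightarrow> 's \<Rightarrow> real" where
  "Kf p g T X 0 t s = 0"
| "Kf p g T X (Suc n) t s = (if s \<in> T then 0 else
     (\<Sum>x\<in>X. p t s x * (g t s x + Kf p g T X n (Suc t) (snd x))))"

lemma sqrt_lower:
  assumes "p \<ge> 0" "p * exp (- g) \<le> r"
  shows "p * exp (- g / 2) \<le> sqrt (p * r)"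
proof -
  have "(p * exp (- g / 2))\<^sup>2 = p * (p * exp (- g))"
    by (simp add: power2_eq_square exp_add[symmetric] algebra_simps)
  also have "\<dots> \<le> p * r" using assms by (intro mult_left_mono) auto
  finally show ?thesis using assms(1) by (intro real_le_rsqrt) auto
qed

lemma bhat_bound:
  assumes fin: "finite X" and pnn: "\<And>t s x. p t s x \<ge> 0" and rnn: "\<And>t s x. r t s x \<ge> 0"
    and XS: "\<And>x. x \<in> X \<Longrightarrow> snd x \<in> S"
    and one: "\<And>t s. s \<in> S \<Longrightarrow> s \<notin> T \<Longrightarrow> (\<Sum>x\<in>X. p t s x) = 1"
    and goodS: "\<And>t s. good t s \<Longrightarrow> s \<in> S"
    and step: "\<And>t s x. good t s \<Longrightarrow> s \<notin> T \<Longrightarrow> x \<in> X \<Longrightarrow> p t s x > 0 \<Longrightarrow>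
        (snd x \<in> T \<or> good (Suc t) (snd x)) \<and> p t s x * exp (- g t s x) \<le> r t s x"
  shows "s \<in> T \<or> good t s \<Longrightarrow>
    exp (- Kf p g T X n t s / 2) \<le> (\<Sum>h\<in>Hs X n. sqrt (stopw p T n t s h * stopw r T n t s h))"
proof (induction n arbitrary: t s)
  case 0 then show ?case by (simp add: Hs_0 stopw_0)
next
  case (Suc n)
  show ?case
  proof (cases "s \<in> T")
    case True
    then show ?thesis by (simp add: sum_Hs_Suc[OF fin] stopw_Nil_Suc stopw_Cons)
  next
    case False
    then have good: "good t s" using Suc.prems by auto
    have sS: "s \<in> S" using goodS[OF good] .
    have "(\<Sum>x\<in>X. p t s x * exp (- (g t s x + Kf p g T X n (Suc t) (snd x)) / 2))
        \<le> (\<Sum>x\<in>X. \<Sum>h\<in>Hs X n. sqrt (p t s x * stopw p T n (Suc t) (snd x) h *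
                 (r t s x * stopw r T n (Suc t) (snd x) h)))"
    proof (intro sum_mono)
      fix x assume x: "x \<in> X"
      show "p t s x * exp (- (g t s x + Kf p g T X n (Suc t) (snd x)) / 2)
        \<le> (\<Sum>h\<in>Hs X n. sqrt (p t s x * stopw p T n (Suc t) (snd x) h *
                 (r t s x * stopw r T n (Suc t) (snd x) h)))"
      proof (cases "p t s x = 0")
        case True then show ?thesis by simp
      next
        case pos: False
        then have pp: "p t s x > 0" using pnn[of t s x] by auto
        note st = step[OF good False x pp]
        have IH: "exp (- Kf p g T X n (Suc t) (snd x) / 2)
            \<le> (\<Sum>h\<in>Hs X n. sqrt (stopw p T n (Suc t) (snd x) h * stopw r T n (Suc t) (snd x) h))"
          using st by (intro Suc.IH) auto
        have sq: "p t s x * exp (- g t s x / 2) \<le> sqrt (p t s x * r t s x)"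
          using st pnn by (intro sqrt_lower) auto
        have "p t s x * exp (- (g t s x + Kf p g T X n (Suc t) (snd x)) / 2)
            = (p t s x * exp (- g t s x / 2)) * exp (- Kf p g T X n (Suc t) (snd x) / 2)"
          by (simp add: exp_add[symmetric] field_simps)
        also have "\<dots> \<le> sqrt (p t s x * r t s x) *
             (\<Sum>h\<in>Hs X n. sqrt (stopw p T n (Suc t) (snd x) h * stopw r T n (Suc t) (snd x) h))"
          using sq IH pnn rnn by (intro mult_mono) auto
        also have "\<dots> = (\<Sum>h\<in>Hs X n. sqrt (p t s x * stopw p T n (Suc t) (snd x) h *
                 (r t s x * stopw r T n (Suc t) (snd x) h)))"
          by (simp add: sum_distrib_left real_sqrt_mult[symmetric] algebra_simps)
        finally show ?thesis .
      qed
    qed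
    moreover have "exp (- Kf p g T X (Suc n) t s / 2)
        \<le> (\<Sum>x\<in>X. p t s x * exp (- (g t s x + Kf p g T X n (Suc t) (snd x)) / 2))"
    proof -
      have "exp (- Kf p g T X (Suc n) t s / 2)
          = exp (\<Sum>x\<in>X. p t s x * (- (g t s x + Kf p g T X n (Suc t) (snd x)) / 2))"
      proof -
        have "(\<Sum>x\<in>X. p t s x * (- (g t s x + Kf p g T X n (Suc t) (snd x)) / 2))
            = (\<Sum>x\<in>X. p t s x * (g t s x + Kf p g T X n (Suc t) (snd x))) * (-1/2)"
          unfolding sum_distrib_right by (intro sum.cong refl) (simp add: field_simps)
        then show ?thesis using False by simp
      qed
      also have "\<dots> \<le> (\<Sum>x\<in>X. p t s x * exp (- (g t s x + Kf p g T X n (Suc t) (snd x)) / 2))"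
        by (rule exp_jensen[OF fin]) (use pnn one[OF sS False] in auto)
      finally show ?thesis .
    qed
    ultimately show ?thesis using False
      by (simp add: sum_Hs_Suc[OF fin] stopw_Nil_Suc stopw_Cons)
  qed
qed

lemma bh_flat:
  assumes fin: "finite H" and P: "\<And>h. h \<in> H \<Longrightarrow> P h \<ge> 0" and Q: "\<And>h. h \<in> H \<Longrightarrow> Q h \<ge> 0"
    and P1: "(\<Sum>h\<in>H. P h) \<le> 1" and Q1: "(\<Sum>h\<in>H. Q h) \<le> 1"
  shows "(\<Sum>h\<in>H. if A h then P h else 0) - (\<Sum>h\<in>H. if A h then Q h else 0)
      \<le> sqrt (1 - (\<Sum>h\<in>H. sqrt (P h * Q h))\<^sup>2)"
proof -
  define m where "m = (\<Sum>h\<in>H. min (P h) (Q h))"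
  define M where "M = (\<Sum>h\<in>H. max (P h) (Q h))"
  define B where "B = (\<Sum>h\<in>H. sqrt (P h * Q h))"
  have mM: "m + M = (\<Sum>h\<in>H. P h) + (\<Sum>h\<in>H. Q h)"
    unfolding m_def M_def sum.distrib[symmetric] by (intro sum.cong) auto
  have m0: "m \<ge> 0" unfolding m_def using P Q by (intro sum_nonneg) auto
  have mle: "m \<le> (\<Sum>h\<in>H. P h)" unfolding m_def by (intro sum_mono) auto
  have "B = (\<Sum>h\<in>H. sqrt (min (P h) (Q h)) * sqrt (max (P h) (Q h)))"
    unfolding B_def real_sqrt_mult[symmetric] by (intro sum.cong refl) (auto simp: min_def max_def mult.commute)
  then have "B\<^sup>2 \<le> (\<Sum>h\<in>H. (sqrt (min (P h) (Q h)))\<^sup>2) * (\<Sum>h\<in>H. (sqrt (max (P h) (Q h)))\<^sup>2)"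
    using Cauchy_Schwarz_ineq_sum by metis
  also have "\<dots> = m * M" unfolding m_def M_def
    using P Q by (intro arg_cong2[where f="(*)"] sum.cong) (auto simp: min_def max_def)
  finally have BmM: "B\<^sup>2 \<le> m * M" .
  have "m * M \<le> m * (2 - m)" using mM P1 Q1 m0 by (intro mult_left_mono) auto
  then have key: "(1 - m)\<^sup>2 \<le> 1 - B\<^sup>2" using BmM by (simp add: power2_eq_square algebra_simps)
  have "(\<Sum>h\<in>H. if A h then P h else 0) - (\<Sum>h\<in>H. if A h then Q h else 0)
      = (\<Sum>h\<in>H. if A h then P h - Q h else 0)"
    by (simp add: sum_subtractf[symmetric] if_distrib cong: if_cong)
  also have "\<dots> \<le> (\<Sum>h\<in>H. P h - min (P h) (Q h))"
    using P Q by (intro sum_mono) auto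
  also have "\<dots> = (\<Sum>h\<in>H. P h) - m" by (simp add: m_def sum_subtractf)
  also have "\<dots> \<le> 1 - m" using P1 by simp
  also have "\<dots> \<le> sqrt (1 - B\<^sup>2)"
    using key mle P1 by (intro real_le_rsqrt) auto
  finally show ?thesis by (simp add: B_def)
qed

definition gE :: "(nat \<Rightarrow> 's \<Rightarrow> 'b \<times> 's \<Rightarrow> real) \<Rightarrow> 's set \<Rightarrow> nat \<Rightarrow> 's \<Rightarrow> ('b \<times> 's) list \<Rightarrow> real" where
  "gE k T t s h = (if lst s h \<in> T then 0 else gpath k T t s h)"

lemma gE_Nil: "gE k T t s [] = (if s \<in> T then 0 else 1)" by (simp add: gE_def)

lemma gE_Cons: "gE k T t s (x # h) = (if s \<in> T then 0 else k t s x * gE k T (Suc t) (snd x) h)"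
  by (simp add: gE_def)

lemma Kf_unroll:
  assumes fin: "finite X"
  shows "Kf p g T X n t s = (\<Sum>k<n. \<Sum>h\<in>lset X k. gE p T t s h *
      (\<Sum>x\<in>X. p (t + k) (lst s h) x * g (t + k) (lst s h) x))"
proof (induction n arbitrary: t s)
  case 0 then show ?case by simp
next
  case (Suc n)
  have "(\<Sum>k<Suc n. \<Sum>h\<in>lset X k. gE p T t s h * (\<Sum>x\<in>X. p (t + k) (lst s h) x * g (t + k) (lst s h) x))
     = (\<Sum>h\<in>lset X 0. gE p T t s h * (\<Sum>x\<in>X. p t (lst s h) x * g t (lst s h) x))
       + (\<Sum>k<n. \<Sum>h\<in>lset X (Suc k). gE p T t s h * (\<Sum>x\<in>X. p (Suc t + k) (lst s h) x * g (Suc t + k) (lst s h) x))"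
    by (subst sum.lessThan_Suc_shift) simp
  also have "(\<Sum>h\<in>lset X 0. gE p T t s h * (\<Sum>x\<in>X. p t (lst s h) x * g t (lst s h) x))
      = (if s \<in> T then 0 else (\<Sum>x\<in>X. p t s x * g t s x))"
    by (simp add: lset_0 gE_Nil)
  also have "(\<Sum>k<n. \<Sum>h\<in>lset X (Suc k). gE p T t s h * (\<Sum>x\<in>X. p (Suc t + k) (lst s h) x * g (Suc t + k) (lst s h) x))
     = (\<Sum>k<n. \<Sum>x\<in>X. (if s \<in> T then 0 else p t s x *
          (\<Sum>h\<in>lset X k. gE p T (Suc t) (snd x) h * (\<Sum>y\<in>X. p (Suc t + k) (lst (snd x) h) y * g (Suc t + k) (lst (snd x) h) y))))"
    by (cases "s \<in> T") (simp_all add: sum_lset_Suc[OF fin] gE_Cons sum_distrib_left mult.assoc)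
  also have "\<dots> = (if s \<in> T then 0 else (\<Sum>x\<in>X. p t s x * Kf p g T X n (Suc t) (snd x)))"
    by (simp add: Suc.IH sum_distrib_left sum.swap[of _ "{..<n}"])
  finally show ?case by (simp add: sum.distrib algebra_simps)
qed

lemma until_partial:
  assumes fin: "finite X" and St: "St \<subseteq> T"
  shows "(\<Sum>k<Suc n. \<Sum>h\<in>lset X k. if lst s h \<in> St then gpath p T t s h else 0)
       = (\<Sum>h\<in>Hs X n. if lst s h \<in> St then stopw p T n t s h else 0)"
proof -
  have "(\<Sum>h\<in>Hs X n. if lst s h \<in> St then stopw p T n t s h else 0)
      = (\<Sum>k<Suc n. \<Sum>h\<in>lset X k. if lst s h \<in> St then stopw p T n t s h else 0)"
    unfolding Hs_eq_UN
    using finite_lset[OF fin]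
    by (subst sum.UNION_disjoint) (auto simp: lset_def)
  also have "\<dots> = (\<Sum>k<Suc n. \<Sum>h\<in>lset X k. if lst s h \<in> St then gpath p T t s h else 0)"
    using St by (intro sum.cong refl) (auto simp: stopw_def)
  finally show ?thesis by simp
qed

definition XX :: "('i, 'o, 'l, 'a) cmg \<Rightarrow> (('i \<Rightarrow> 'a) \<times> ('i, 'o, 'l) jstate) set" where
  "XX G = jacts G \<times> jstates G"

definition pk :: "('i, 'o, 'l, 'a) cmg \<Rightarrow> (('i, 'o, 'l) jstate \<Rightarrow> ('i \<Rightarrow> 'a) pmf)
   \<Rightarrow> nat \<Rightarrow> ('i, 'o, 'l) jstate \<Rightarrow> ('i \<Rightarrow> 'a) \<times> ('i, 'o, 'l) jstate \<Rightarrow> real" where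
  "pk G pa t s x = pmf (pa s) (fst x) * jtrans G s (fst x) (snd x)"

definition rk where
  "rk G pc q t s x = rkernel G pc q t s (fst x) (snd x)"

lemma jtrans_nonneg: "jtrans G s a s' \<ge> 0"
  by (auto simp: jtrans_def intro: prod_nonneg)

lemma pk_nonneg: "pk G pa t s x \<ge> 0"
  by (simp add: pk_def jtrans_nonneg)

lemma rk_nonneg: "rk G pc q t s x \<ge> 0"
  by (auto simp: rk_def rkernel_def intro!: sum_nonneg mult_nonneg_nonneg prod_nonneg)

lemma fpath_gpath: "fpath G pa T s h = gpath (pk G pa) T t s h"
  by (induction h arbitrary: s t) (auto simp: pk_def)

lemma rpath_gpath: "rpath G pc q T t s h = gpath (rk G pc q) T t s h"
  by (induction h arbitrary: s t) (auto simp: rk_def)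

lemma last_st_lst: "last_st = lst"
  by (intro ext) (simp add: last_st_def lst_def)

lemma hists_lset: "hists G k = lset (XX G) k"
  by (simp add: hists_def lset_def XX_def)

lemma fprobE_gE: "fprobE G pa T h = gE (pk G pa) T t (s_init G) h"
  by (simp add: fprobE_def gE_def last_st_lst fpath_gpath[of _ _ _ _ _ t])

lemma finite_XX: "cmg_wf G \<Longrightarrow> finite (XX G)"
  unfolding XX_def jacts_def jstates_def
  by (intro finite_cartesian_product finite_PiE) (auto simp: cmg_wf_def)

lemma XX_snd: "x \<in> XX G \<Longrightarrow> snd x \<in> jstates G"
  by (auto simp: XX_def)

lemma s_init_jstates: "cmg_wf G \<Longrightarrow> s_init G \<in> jstates G"
  by (auto simp: cmg_wf_def s_init_def jstates_def)

lemma sum_jtrans: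
  assumes wf: "cmg_wf G" and s: "s \<in> jstates G" and a: "a \<in> jacts G"
  shows "(\<Sum>s'\<in>jstates G. jtrans G s a s') = 1"
proof -
  let ?A = "agents G"
  define F where "F i z y = pmf (trans G i (fst s i, snd s i) (a i)) (z, y)" for i z y
  have finA: "finite ?A" using wf by (simp add: cmg_wf_def)
  have fin: "\<And>i. i \<in> ?A \<Longrightarrow> finite (pubS G i) \<and> finite (locS G i)" using wf by (simp add: cmg_wf_def)
  have "(\<Sum>s'\<in>jstates G. jtrans G s a s') =
      (\<Sum>o'\<in>PiE ?A (pubS G). \<Sum>l'\<in>PiE ?A (locS G). \<Prod>i\<in>?A. F i (o' i) (l' i))"
  proof -
    have "(\<Sum>s'\<in>jstates G. jtrans G s a s') = (\<Sum>s'\<in>jstates G. \<Prod>i\<in>?A. F i (fst s' i) (snd s' i))"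
      by (intro sum.cong refl) (simp add: jtrans_def F_def)
    then show ?thesis unfolding jstates_def by (simp add: sum.cartesian_product case_prod_beta)
  qed
  also have "\<dots> = (\<Sum>o'\<in>PiE ?A (pubS G). \<Prod>i\<in>?A. \<Sum>y\<in>locS G i. F i (o' i) y)"
    by (intro sum.cong refl prod_sum_PiE[symmetric]) (use finA fin in auto)
  also have "\<dots> = (\<Prod>i\<in>?A. \<Sum>z\<in>pubS G i. \<Sum>y\<in>locS G i. F i z y)"
    by (rule prod_sum_PiE[symmetric]) (use finA fin in auto)
  also have "\<dots> = (\<Prod>i\<in>?A. 1)"
  proof (intro prod.cong refl)
    fix i assume i: "i \<in> ?A"
    have "(\<Sum>z\<in>pubS G i. \<Sum>y\<in>locS G i. F i z y) = (\<Sum>zy\<in>pubS G i \<times> locS G i. pmf (trans G i (fst s i, snd s i) (a i)) zy)"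
      by (simp add: sum.cartesian_product F_def case_prod_beta)
    also have "\<dots> = 1"
    proof (rule sum_pmf_eq_1)
      show "finite (pubS G i \<times> locS G i)" using fin[OF i] by simp
      have "(fst s i, snd s i) \<in> pubS G i \<times> locS G i" "a i \<in> acts G i"
        using s a i by (auto simp: jstates_def jacts_def PiE_iff)
      then show "set_pmf (trans G i (fst s i, snd s i) (a i)) \<subseteq> pubS G i \<times> locS G i"
        using wf i unfolding cmg_wf_def by blast
    qed
    finally show "(\<Sum>z\<in>pubS G i. \<Sum>y\<in>locS G i. F i z y) = 1" .
  qed
  finally show ?thesis by simp
qed

lemma sum_pk:
  assumes wf: "cmg_wf G" and pa: "pos_act_policy G pa" and s: "s \<in> jstates G"
  shows "(\<Sum>x\<in>XX G. pk G pa t s x) = 1"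
proof -
  have finJ: "finite (jacts G)" "finite (jstates G)"
    using wf by (auto simp: cmg_wf_def jacts_def jstates_def intro!: finite_PiE)
  have "(\<Sum>x\<in>XX G. pk G pa t s x) = (\<Sum>a\<in>jacts G. pmf (pa s) a * (\<Sum>s'\<in>jstates G. jtrans G s a s'))"
    unfolding XX_def by (simp add: pk_def sum_distrib_left sum.cartesian_product case_prod_beta)
  also have "\<dots> = (\<Sum>a\<in>jacts G. pmf (pa s) a)"
    by (intro sum.cong refl) (simp add: sum_jtrans[OF wf s])
  also have "\<dots> = 1"
    using pa s finJ by (intro sum_pmf_eq_1) (auto simp: pos_act_policy_def)
  finally show ?thesis .
qed

definition prj :: "'i set \<Rightarrow> ('i \<Rightarrow> 'a) \<times> ('i \<Rightarrow> 'o) \<times> ('i \<Rightarrow> 'l) \<Rightarrow> ('i \<Rightarrow> 'a) \<times> ('i \<Rightarrow> 'o) \<times> ('i \<Rightarrow> 'l)" where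
  "prj c x = (restrict (fst x) c, restrict (fst (snd x)) c, restrict (snd (snd x)) c)"

lemma restrict_eq_at: "restrict f C = restrict g C \<Longrightarrow> i \<in> C \<Longrightarrow> f i = g i"
  by (metis restrict_apply')

lemma sum_pmf_le_1: "finite S \<Longrightarrow> (\<Sum>y\<in>S. pmf M y) \<le> 1"
  using measure_measure_pmf_finite[of S M] measure_pmf.prob_le_1[of M S] by simp

lemma prj_in_loc_triples:
  assumes "x \<in> XX G" "c \<subseteq> agents G"
  shows "prj c x \<in> loc_triples G c"
  using assms by (auto simp: prj_def loc_triples_def XX_def jacts_def jstates_def PiE_iff)

lemma finite_loc_triples:
  assumes "cmg_wf G" "c \<subseteq> agents G"
  shows "finite (loc_triples G c)"
proof -
  have fA: "finite (agents G)" and fi: "\<And>i. i \<in> agents G \<Longrightarrow> finite (acts G i) \<and> finite (pubS G i) \<and> finite (locS G i)"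
    using assms(1) unfolding cmg_wf_def by blast+
  have "finite c" using assms(2) fA finite_subset by blast
  then show ?thesis using assms(2) fi unfolding loc_triples_def
    by (intro finite_cartesian_product finite_PiE) auto
qed

lemma ext_eq_split:
  assumes "f \<in> extensional A" "g \<in> extensional A" "restrict f c = restrict g c"
    "\<And>i. i \<in> A - c \<Longrightarrow> restrict f {i} = restrict g {i}"
  shows "f = g"
proof (rule ext)
  fix i show "f i = g i"
  proof (cases "i \<in> A")
    case False
    show ?thesis using extensional_arb[OF assms(1) False] extensional_arb[OF assms(2) False] by (rule trans_sym)
  next
    case iA: True
    show ?thesis
    proof (cases "i \<in> c")
      case True then show ?thesis by (rule restrict_eq_at[OF assms(3)])
    next
      case False
      then have "i \<in> A - c" using iA by simp
      have "i \<in> {i}" by simp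
      with assms(4)[OF \<open>i \<in> A - c\<close>] show ?thesis by (rule restrict_eq_at)
    qed
  qed
qed

lemma XX_ext: "x \<in> XX G \<Longrightarrow> fst x \<in> extensional (agents G) \<and> fst (snd x) \<in> extensional (agents G) \<and> snd (snd x) \<in> extensional (agents G)"
  by (auto simp: XX_def jacts_def jstates_def PiE_def)

lemma sum_Y_le:
  fixes G :: "('i, 'o, 'l, 'a) cmg"
  assumes wf: "cmg_wf G" and c: "c \<subseteq> agents G"
  shows "(\<Sum>x\<in>XX G. pmf Qc (prj c x) * (\<Prod>i\<in>agents G - c. pmf (Qi i) (prj {i} x))) \<le> 1"
proof -
  let ?A = "agents G"
  define \<phi> where "\<phi> (x :: ('i \<Rightarrow> 'a) \<times> ('i, 'o, 'l) jstate) = (prj c x, \<lambda>i\<in>?A - c. prj {i} x)" for x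
  define Z where "Z = loc_triples G c \<times> PiE (?A - c) (\<lambda>i. loc_triples G {i})"
  define F where "F z = pmf Qc (fst z) * (\<Prod>i\<in>?A - c. pmf (Qi i) (snd z i))" for z
  have finA: "finite ?A" using wf by (simp add: cmg_wf_def)
  have inj: "inj_on \<phi> (XX G)"
  proof (rule inj_onI)
    fix x y assume x: "x \<in> XX G" and y: "y \<in> XX G" and eq: "\<phi> x = \<phi> y"
    have e1: "prj c x = prj c y" using eq by (simp add: \<phi>_def)
    have e2: "prj {i} x = prj {i} y" if "i \<in> ?A - c" for i
    proof -
      have "(\<lambda>i\<in>?A - c. prj {i} x) = (\<lambda>i\<in>?A - c. prj {i} y)" using eq by (simp add: \<phi>_def)
      then show ?thesis using that by (rule restrict_eq_at)
    qed
    have ex: "fst x \<in> extensional ?A" "fst y \<in> extensional ?A" "fst (snd x) \<in> extensional ?A"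
      "fst (snd y) \<in> extensional ?A" "snd (snd x) \<in> extensional ?A" "snd (snd y) \<in> extensional ?A"
      using XX_ext[OF x] XX_ext[OF y] by blast+
    have r1: "restrict (fst x) c = restrict (fst y) c" "restrict (fst (snd x)) c = restrict (fst (snd y)) c"
       "restrict (snd (snd x)) c = restrict (snd (snd y)) c"
      using e1 unfolding prj_def by simp_all
    have r2: "restrict (fst x) {i} = restrict (fst y) {i}" "restrict (fst (snd x)) {i} = restrict (fst (snd y)) {i}"
       "restrict (snd (snd x)) {i} = restrict (snd (snd y)) {i}"
      if "i \<in> ?A - c" for i
      using e2[OF that] unfolding prj_def by simp_all
    have "fst x = fst y" by (rule ext_eq_split[OF ex(1,2) r1(1) r2(1)])
    moreover have "fst (snd x) = fst (snd y)" by (rule ext_eq_split[OF ex(3,4) r1(2) r2(2)])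
    moreover have "snd (snd x) = snd (snd y)" by (rule ext_eq_split[OF ex(5,6) r1(3) r2(3)])
    ultimately show "x = y" by (simp add: prod_eq_iff)
  qed
  have sub: "\<phi> ` XX G \<subseteq> Z"
  proof
    fix z assume "z \<in> \<phi> ` XX G"
    then obtain x where x: "x \<in> XX G" and z: "z = \<phi> x" by blast
    have "prj {i} x \<in> loc_triples G {i}" if "i \<in> ?A - c" for i
      using that by (intro prj_in_loc_triples[OF x]) auto
    then show "z \<in> Z" unfolding z \<phi>_def Z_def
      using prj_in_loc_triples[OF x c] by (simp add: restrict_PiE_iff)
  qed
  have finZ: "finite Z" unfolding Z_def
    using finite_loc_triples[OF wf c] finite_loc_triples[OF wf] finA
    by (intro finite_cartesian_product finite_PiE) auto
  have F0: "F z \<ge> 0" for z by (simp add: F_def prod_nonneg)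
  have "(\<Sum>x\<in>XX G. pmf Qc (prj c x) * (\<Prod>i\<in>?A - c. pmf (Qi i) (prj {i} x))) = (\<Sum>x\<in>XX G. F (\<phi> x))"
    by (intro sum.cong refl) (simp add: F_def \<phi>_def)
  also have "\<dots> = (\<Sum>z\<in>\<phi> ` XX G. F z)" using inj by (simp add: sum.reindex)
  also have "\<dots> \<le> (\<Sum>z\<in>Z. F z)" using sub finZ F0 by (intro sum_mono2) auto
  also have "\<dots> = (\<Sum>y\<in>loc_triples G c. pmf Qc y) * (\<Sum>f\<in>PiE (?A - c) (\<lambda>i. loc_triples G {i}). \<Prod>i\<in>?A - c. pmf (Qi i) (f i))"
    unfolding Z_def F_def sum_product sum.cartesian_product by (simp add: case_prod_beta)
  also have "(\<Sum>f\<in>PiE (?A - c) (\<lambda>i. loc_triples G {i}). \<Prod>i\<in>?A - c. pmf (Qi i) (f i))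
      = (\<Prod>i\<in>?A - c. \<Sum>z\<in>loc_triples G {i}. pmf (Qi i) z)"
    by (rule prod_sum_PiE[symmetric]) (use finA finite_loc_triples[OF wf] in auto)
  also have "(\<Sum>y\<in>loc_triples G c. pmf Qc y) * \<dots> \<le> 1 * 1"
  proof (intro mult_mono)
    show "(\<Sum>y\<in>loc_triples G c. pmf Qc y) \<le> 1" by (rule sum_pmf_le_1[OF finite_loc_triples[OF wf c]])
    show "(\<Prod>i\<in>?A - c. \<Sum>z\<in>loc_triples G {i}. pmf (Qi i) z) \<le> 1"
      by (intro prod_le_1) (auto intro: sum_nonneg sum_pmf_le_1 finite_loc_triples[OF wf])
  qed (auto intro!: sum_nonneg prod_nonneg)
  also have "(1::real) * 1 = 1" by simp
  finally show ?thesis .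
qed

lemma finite_comm_acts: "cmg_wf G \<Longrightarrow> finite (comm_acts G)"
  by (rule finite_subset[of _ "Pow (agents G)"]) (auto simp: comm_acts_def cmg_wf_def)

lemma comm_acts_sub: "c \<in> comm_acts G \<Longrightarrow> c \<subseteq> agents G"
  by (simp add: comm_acts_def)

lemma rk_eq: "rk G pc q t s x = (\<Sum>c\<in>comm_acts G. pmf (pc (fst s)) c *
      (pmf (q t c (fst s) (restrict (snd s) c)) (prj c x) *
       (\<Prod>i\<in>agents G - c. pmf (q t {i} (fst s) (restrict (snd s) {i})) (prj {i} x))))"
  by (simp add: rk_def rkernel_def prj_def mult.assoc)

lemma sum_rk:
  assumes wf: "cmg_wf G"
  shows "(\<Sum>x\<in>XX G. rk G pc q t s x) \<le> 1"
proof -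
  have "(\<Sum>x\<in>XX G. rk G pc q t s x) = (\<Sum>c\<in>comm_acts G. pmf (pc (fst s)) c *
      (\<Sum>x\<in>XX G. pmf (q t c (fst s) (restrict (snd s) c)) (prj c x) *
       (\<Prod>i\<in>agents G - c. pmf (q t {i} (fst s) (restrict (snd s) {i})) (prj {i} x))))"
    unfolding rk_eq sum_distrib_left by (rule sum.swap)
  also have "\<dots> \<le> (\<Sum>c\<in>comm_acts G. pmf (pc (fst s)) c * 1)"
    by (intro sum_mono mult_left_mono sum_Y_le[OF wf] comm_acts_sub) auto
  also have "\<dots> \<le> 1" using sum_pmf_le_1[OF finite_comm_acts[OF wf]] by simp
  finally show ?thesis .
qed

lemma lst_jstates:
  assumes wf: "cmg_wf G" and h: "h \<in> lset (XX G) k"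
  shows "lst (s_init G) h \<in> jstates G"
proof (cases "h = []")
  case True then show ?thesis using s_init_jstates[OF wf] by simp
next
  case False
  then have "last h \<in> set h" by simp
  then have "last h \<in> XX G" using h by (auto simp: lset_def)
  then show ?thesis using False by (simp add: lst_def XX_snd)
qed

lemma fpath_nonneg: "fpath G pa T s h \<ge> 0"
  unfolding fpath_gpath[of _ _ _ _ _ 0] by (rule gpath_nonneg) (rule pk_nonneg)

lemma fprobE_nonneg: "fprobE G pa T h \<ge> 0"
  by (simp add: fprobE_def fpath_nonneg)

lemma pk_time: "pk G pa t s x = pk G pa t' s x"
  by (simp add: pk_def)

lemma fpath_snoc:
  "fpath G pa T s0 (h @ [x]) = fpath G pa T s0 h * (if lst s0 h \<in> T then 0 else pk G pa t (lst s0 h) x)"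
  unfolding fpath_gpath[of _ _ _ _ _ 0] gpath_snoc by (simp add: pk_def)

lemma fprobE_pos:
  assumes "fprobE G pa T h > 0"
  shows "fprobE G pa T h = fpath G pa T (s_init G) h" "lst (s_init G) h \<notin> T"
  using assms by (auto simp: fprobE_def last_st_lst split: if_splits)

lemma fprobE_snoc:
  "fprobE G pa T (h @ [x]) = (if snd x \<in> T then 0 else fpath G pa T (s_init G) h *
      (if lst (s_init G) h \<in> T then 0 else pk G pa t (lst (s_init G) h) x))"
  by (simp add: fprobE_def last_st_lst fpath_snoc[of _ _ _ _ _ _ t])

definition goodp :: "('i, 'o, 'l, 'a) cmg \<Rightarrow> (('i, 'o, 'l) jstate \<Rightarrow> ('i \<Rightarrow> 'a) pmf)
   \<Rightarrow> ('i, 'o, 'l) jstate set \<Rightarrow> nat \<Rightarrow> ('i, 'o, 'l) jstate \<Rightarrow> bool" where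
  "goodp G pa T t s \<longleftrightarrow> t \<ge> 1 \<and> (\<exists>h\<in>hists G (t - 1). last_st (s_init G) h = s \<and> fprobE G pa T h > 0)"

lemma good_jstates: "cmg_wf G \<Longrightarrow> goodp G pa T t s \<Longrightarrow> s \<in> jstates G"
  unfolding goodp_def hists_lset last_st_lst using lst_jstates by blast

lemma good_init: "s_init G \<notin> T \<Longrightarrow> goodp G pa T 1 (s_init G)"
  unfolding goodp_def by (auto simp: hists_def fprobE_def last_st_def intro!: bexI[of _ "[]"])

lemma good_step:
  assumes g: "goodp G pa T t s" and sT: "s \<notin> T" and x: "x \<in> XX G" and p: "pk G pa t s x > 0"
  shows "snd x \<in> T \<or> goodp G pa T (Suc t) (snd x)"
proof (cases "snd x \<in> T")
  case False
  from g obtain h where t: "t \<ge> 1" and h: "h \<in> hists G (t - 1)" and ls: "last_st (s_init G) h = s"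
    and E: "fprobE G pa T h > 0" by (auto simp: goodp_def)
  have h': "h @ [x] \<in> hists G t" using h x t by (auto simp: hists_def XX_def)
  have "fprobE G pa T (h @ [x]) = fprobE G pa T h * pk G pa t s x"
    using fprobE_pos[OF E] False ls by (simp add: fprobE_snoc[of _ _ _ _ _ t] last_st_lst)
  also have "\<dots> > 0" using E p by simp
  finally have "fprobE G pa T (h @ [x]) > 0" .
  then have "goodp G pa T (Suc t) (snd x)"
    unfolding goodp_def using h' by (auto simp: last_st_lst intro!: bexI[of _ "h @ [x]"])
  then show ?thesis by simp
qed simp

lemma q_pos:
  assumes wf: "cmg_wf G" and adm: "q_admissible G pa T q"
    and g: "goodp G pa T t s" and sT: "s \<notin> T" and x: "x \<in> XX G" and p: "pk G pa t s x > 0"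
    and c: "c \<in> comm_acts G \<or> (\<exists>i\<in>agents G. c = {i})"
  shows "pmf (q t c (fst s) (restrict (snd s) c)) (prj c x) > 0"
proof -
  from g obtain h where t: "t \<ge> 1" and h: "h \<in> hists G (t - 1)" and ls: "last_st (s_init G) h = s"
    and E: "fprobE G pa T h > 0" by (auto simp: goodp_def)
  have sJ: "s \<in> jstates G" using good_jstates[OF wf g] .
  have cA: "c \<subseteq> agents G" using c by (auto simp: comm_acts_def)
  define ob where "ob = fst s"
  define lc where "lc = restrict (snd s) c"
  have ob: "ob \<in> pubs G" using sJ by (simp add: ob_def jstates_def pubs_def mem_Times_iff)
  have lc: "lc \<in> PiE c (locS G)" using sJ cA by (auto simp: lc_def jstates_def PiE_iff)
  have finH: "finite (hists G n)" for n using finite_lset[OF finite_XX[OF wf]] by (simp add: hists_lset)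
  have "(\<lambda>h. if fst (last_st (s_init G) h) = ob \<and> restrict (snd (last_st (s_init G) h)) c = lc
       then fprobE G pa T h else 0) h \<le> (\<Sum>h\<in>hists G (t - 1). (if fst (last_st (s_init G) h) = ob \<and> restrict (snd (last_st (s_init G) h)) c = lc
       then fprobE G pa T h else 0))"
    by (rule member_le_sum[OF h]) (use fprobE_nonneg finH in auto)
  then have "fprobE G pa T h \<le> fmarg G pa T t c ob lc"
    unfolding fmarg_def using ls by (simp add: ob_def lc_def)
  then have fm: "fmarg G pa T t c ob lc > 0" using E by simp
  have h': "h @ [x] \<in> hists G t" using h x t by (auto simp: hists_def XX_def)
  have fp: "fpath G pa T (s_init G) (h @ [x]) > 0"
    using fprobE_pos[OF E] ls E p by (simp add: fpath_snoc[of _ _ _ _ _ _ t] last_st_lst)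
  define FJ where "FJ h' = (let s = last_st (s_init G) (butlast h'); a = fst (last h'); s1 = snd (last h') in
       if fst s = ob \<and> restrict (snd s) c = lc \<and>
          (restrict a c, restrict (fst s1) c, restrict (snd s1) c) = prj c x
       then fpath G pa T (s_init G) h' else 0)" for h'
  have "FJ (h @ [x]) \<le> (\<Sum>h'\<in>hists G t. FJ h')"
    by (rule member_le_sum[OF h']) (use finH in \<open>simp_all add: FJ_def Let_def fpath_nonneg\<close>)
  then have "fpath G pa T (s_init G) (h @ [x]) \<le> fjoint G pa T t c ob lc (prj c x)"
    unfolding fjoint_def FJ_def[abs_def] using ls by (simp add: ob_def lc_def prj_def Let_def)
  then have fj: "fjoint G pa T t c ob lc (prj c x) > 0" using fp by simp
  have "pmf (q t c ob lc) (prj c x) = qfull G pa T t c ob lc (prj c x)"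
    using adm t c ob lc fm unfolding q_admissible_def by blast
  also have "\<dots> > 0" using fj fm by (simp add: qfull_def)
  finally show ?thesis by (simp add: ob_def lc_def)
qed

definition gq where
  "gq G q t s c x = pmf (q t c (fst s) (restrict (snd s) c)) (prj c x)"

definition gfun where
  "gfun G pa pc q t s x = ln (pk G pa t s x)
     - (\<Sum>c\<in>comm_acts G. pmf (pc (fst s)) c * ln (gq G q t s c x))
     - (\<Sum>i\<in>agents G. wprime G pc (fst s) i * ln (gq G q t s {i} x))"

lemma wprime_swap:
  assumes wf: "cmg_wf G"
  shows "(\<Sum>i\<in>agents G. wprime G pc ob i * L i) = (\<Sum>c\<in>comm_acts G. pmf (pc ob) c * (\<Sum>i\<in>agents G - c. L i))"
proof -
  have fA: "finite (agents G)" using wf by (simp add: cmg_wf_def)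
  have fC: "finite (comm_acts G)" by (rule finite_comm_acts[OF wf])
  have w: "wprime G pc ob i = (\<Sum>c\<in>comm_acts G. if i \<notin> c then pmf (pc ob) c else 0)" for i
    unfolding wprime_def using fC by (simp add: sum.inter_filter)
  have "(\<Sum>i\<in>agents G. wprime G pc ob i * L i) = (\<Sum>i\<in>agents G. \<Sum>c\<in>comm_acts G. if i \<notin> c then pmf (pc ob) c * L i else 0)"
    unfolding w sum_distrib_right by (intro sum.cong refl) simp
  also have "\<dots> = (\<Sum>c\<in>comm_acts G. \<Sum>i\<in>agents G. if i \<notin> c then pmf (pc ob) c * L i else 0)"
    by (rule sum.swap)
  also have "\<dots> = (\<Sum>c\<in>comm_acts G. pmf (pc ob) c * (\<Sum>i\<in>agents G - c. L i))"
  proof (intro sum.cong refl)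
    fix c
    have "agents G - c = {i \<in> agents G. i \<notin> c}" by auto
    then show "(\<Sum>i\<in>agents G. if i \<notin> c then pmf (pc ob) c * L i else 0) = pmf (pc ob) c * (\<Sum>i\<in>agents G - c. L i)"
      using fA by (simp add: sum.inter_filter sum_distrib_left) (intro sum.cong refl; simp)
  qed
  finally show ?thesis .
qed

lemma amgm_step:
  assumes wf: "cmg_wf G" and adm: "q_admissible G pa T q" and pcp: "pos_comm_policy G pc"
    and g: "goodp G pa T t s" and sT: "s \<notin> T" and x: "x \<in> XX G" and p: "pk G pa t s x > 0"
  shows "pk G pa t s x * exp (- gfun G pa pc q t s x) \<le> rk G pc q t s x"
proof -
  let ?A = "agents G" and ?C = "comm_acts G"
  define w where "w c = pmf (pc (fst s)) c" for c
  define Y where "Y c = gq G q t s c x * (\<Prod>i\<in>?A - c. gq G q t s {i} x)" for c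
  have fA: "finite ?A" using wf by (simp add: cmg_wf_def)
  have fC: "finite ?C" by (rule finite_comm_acts[OF wf])
  have gqc: "gq G q t s c x > 0" if "c \<in> ?C" for c
    unfolding gq_def by (rule q_pos[OF wf adm g sT x p]) (use that in auto)
  have gqi: "gq G q t s {i} x > 0" if "i \<in> ?A" for i
    unfolding gq_def by (rule q_pos[OF wf adm g sT x p]) (use that in auto)
  have Ypos: "Y c > 0" if "c \<in> ?C" for c
    unfolding Y_def using gqc[OF that] gqi by (intro mult_pos_pos prod_pos) auto
  have lnY: "ln (Y c) = ln (gq G q t s c x) + (\<Sum>i\<in>?A - c. ln (gq G q t s {i} x))" if "c \<in> ?C" for c
  proof -
    have "(\<Prod>i\<in>?A - c. gq G q t s {i} x) > 0" using gqi by (intro prod_pos) auto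
    then have "ln (Y c) = ln (gq G q t s c x) + ln (\<Prod>i\<in>?A - c. gq G q t s {i} x)"
      unfolding Y_def using gqc[OF that] by (simp add: ln_mult)
    also have "ln (\<Prod>i\<in>?A - c. gq G q t s {i} x) = (\<Sum>i\<in>?A - c. ln (gq G q t s {i} x))"
      using fA gqi by (intro ln_prod) (auto, metis less_irrefl)
    finally show ?thesis .
  qed
  have sJ: "s \<in> jstates G" by (rule good_jstates[OF wf g])
  have ob: "fst s \<in> pubs G" using sJ by (simp add: jstates_def pubs_def mem_Times_iff)
  have w1: "(\<Sum>c\<in>?C. w c) = 1"
    unfolding w_def using pcp ob fC by (intro sum_pmf_eq_1) (auto simp: pos_comm_policy_def)
  have "- gfun G pa pc q t s x = - ln (pk G pa t s x) + (\<Sum>c\<in>?C. w c * ln (Y c))"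
  proof -
    have "(\<Sum>c\<in>?C. w c * ln (Y c)) = (\<Sum>c\<in>?C. w c * ln (gq G q t s c x)) + (\<Sum>c\<in>?C. w c * (\<Sum>i\<in>?A - c. ln (gq G q t s {i} x)))"
      by (simp add: lnY distrib_left sum.distrib)
    also have "(\<Sum>c\<in>?C. w c * (\<Sum>i\<in>?A - c. ln (gq G q t s {i} x))) = (\<Sum>i\<in>?A. wprime G pc (fst s) i * ln (gq G q t s {i} x))"
      unfolding w_def by (rule wprime_swap[OF wf, symmetric])
    finally show ?thesis by (simp add: gfun_def w_def)
  qed
  then have "pk G pa t s x * exp (- gfun G pa pc q t s x) = exp (\<Sum>c\<in>?C. w c * ln (Y c))"
    using p by (simp add: exp_diff)
  also have "\<dots> \<le> (\<Sum>c\<in>?C. w c * exp (ln (Y c)))"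
    by (rule exp_jensen[OF fC _ w1]) (simp add: w_def)
  also have "\<dots> = (\<Sum>c\<in>?C. w c * Y c)"
    using Ypos by (intro sum.cong refl) simp
  also have "\<dots> = rk G pc q t s x"
    unfolding rk_eq Y_def w_def gq_def by simp
  finally show ?thesis .
qed

lemma regroup2:
  assumes "finite H" "finite K1" "finite K2" "\<And>h. h \<in> H \<Longrightarrow> k1 h \<in> K1 \<and> k2 h \<in> K2"
  shows "(\<Sum>h\<in>H. f h) = (\<Sum>a\<in>K1. \<Sum>b\<in>K2. \<Sum>h\<in>H. if k1 h = a \<and> k2 h = b then f h else (0::real))"
proof -
  have "(\<Sum>a\<in>K1. \<Sum>b\<in>K2. \<Sum>h\<in>H. if k1 h = a \<and> k2 h = b then f h else 0)
      = (\<Sum>a\<in>K1. \<Sum>h\<in>H. \<Sum>b\<in>K2. if k1 h = a \<and> k2 h = b then f h else 0)"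
    by (intro sum.cong refl sum.swap)
  also have "\<dots> = (\<Sum>h\<in>H. \<Sum>a\<in>K1. \<Sum>b\<in>K2. if k1 h = a \<and> k2 h = b then f h else 0)"
    by (rule sum.swap)
  also have "\<dots> = (\<Sum>h\<in>H. f h)"
  proof (intro sum.cong refl)
    fix h assume h: "h \<in> H"
    have "(\<Sum>b\<in>K2. if k1 h = a \<and> k2 h = b then f h else 0) = (if k1 h = a then f h else 0)" for a
      using assms(3) assms(4)[OF h] by (cases "k1 h = a") (simp_all add: sum.delta)
    then show "(\<Sum>a\<in>K1. \<Sum>b\<in>K2. if k1 h = a \<and> k2 h = b then f h else 0) = f h"
      using assms(2) assms(4)[OF h] by (simp add: sum.delta)
  qed
  finally show ?thesis by simp
qed

lemma fprobE_pk: "fprobE G pa T h * pk G pa t (last_st (s_init G) h) x = fpath G pa T (s_init G) (h @ [x])"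
  by (simp add: fprobE_def fpath_snoc[of _ _ _ _ _ _ t] last_st_lst)

lemma xlogx_eq: "xlogx p = p * ln p" by (simp add: xlogx_def)

lemma hent_term:
  assumes wf: "cmg_wf G"
  shows "(\<Sum>h\<in>hists G k. fprobE G pa T h * (\<Sum>x\<in>XX G. pk G pa t (last_st (s_init G) h) x * ln (pk G pa t (last_st (s_init G) h) x)))
     = - Hent G pa T (Suc k)"
proof -
  have "fprobE G pa T h * (\<Sum>x\<in>XX G. pk G pa t (last_st (s_init G) h) x * ln (pk G pa t (last_st (s_init G) h) x))
      = - (fprobE G pa T h * entropy_on (\<lambda>x. fpath G pa T (s_init G) (h @ [x]) / fprobE G pa T h) (jacts G \<times> jstates G))" for h
  proof (cases "fprobE G pa T h = 0")
    case True then show ?thesis by simp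
  next
    case False
    have "fpath G pa T (s_init G) (h @ [x]) / fprobE G pa T h = pk G pa t (last_st (s_init G) h) x" for x
      using False by (simp add: fprobE_pk[of _ _ _ _ t, symmetric])
    then show ?thesis by (simp add: entropy_on_def xlogx_eq XX_def)
  qed
  then show ?thesis by (simp add: Hent_def sum_negf)
qed

lemma key_term:
  fixes G :: "('i, 'o, 'l, 'a) cmg"
  assumes wf: "cmg_wf G" and adm: "q_admissible G pa T q"
    and c: "c \<in> comm_acts G \<or> (\<exists>i\<in>agents G. c = {i})"
  shows "(\<Sum>h\<in>hists G k. fprobE G pa T h * (\<Sum>x\<in>XX G. pk G pa t (last_st (s_init G) h) x *
           (W (fst (last_st (s_init G) h)) * - ln (pmf (q (Suc k) c (fst (last_st (s_init G) h))
               (restrict (snd (last_st (s_init G) h)) c)) (prj c x)))))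
     = (\<Sum>ob\<in>pubs G. \<Sum>lc\<in>PiE c (locS G). W ob * fmarg G pa T (Suc k) c ob lc *
           entropy_on (qfull G pa T (Suc k) c ob lc) (loc_triples G c))"
proof -
  have cA: "c \<subseteq> agents G" using c by (auto simp: comm_acts_def)
  have fX: "finite (XX G)" by (rule finite_XX[OF wf])
  have finH: "finite (hists G n)" for n using finite_lset[OF fX] by (simp add: hists_lset)
  have fA: "finite (agents G)" and fi: "\<And>i. i \<in> agents G \<Longrightarrow> finite (pubS G i) \<and> finite (locS G i)"
    using wf unfolding cmg_wf_def by blast+
  have fP: "finite (pubs G)" unfolding pubs_def using fA fi by (intro finite_PiE) auto
  have fc: "finite c" using cA fA finite_subset by blast
  have fL: "finite (PiE c (locS G))" using fc fi cA by (intro finite_PiE) auto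
  define sh where "sh (h :: ('i, 'o, 'l, 'a) hist) = last_st (s_init G) h" for h
  define cond where "cond ob lc h \<longleftrightarrow> fst (sh h) = ob \<and> restrict (snd (sh h)) c = lc" for ob lc h
  define Phi where "Phi h = fprobE G pa T h * (\<Sum>x\<in>XX G. pk G pa t (sh h) x *
           (W (fst (sh h)) * - ln (pmf (q (Suc k) c (fst (sh h)) (restrict (snd (sh h)) c)) (prj c x))))" for h
  have keys: "fst (sh h) \<in> pubs G \<and> restrict (snd (sh h)) c \<in> PiE c (locS G)" if "h \<in> hists G k" for h
  proof -
    have "sh h \<in> jstates G" unfolding sh_def last_st_lst using lst_jstates[OF wf] that by (simp add: hists_lset)
    then show ?thesis using cA by (auto simp: jstates_def pubs_def PiE_iff)
  qed
  have "(\<Sum>h\<in>hists G k. Phi h) = (\<Sum>ob\<in>pubs G. \<Sum>lc\<in>PiE c (locS G). \<Sum>h\<in>hists G k. if cond ob lc h then Phi h else 0)"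
    unfolding cond_def by (rule regroup2[OF finH fP fL keys])
  also have "\<dots> = (\<Sum>ob\<in>pubs G. \<Sum>lc\<in>PiE c (locS G). W ob * fmarg G pa T (Suc k) c ob lc *
           entropy_on (qfull G pa T (Suc k) c ob lc) (loc_triples G c))"
  proof (intro sum.cong refl)
    fix ob lc assume ob: "ob \<in> pubs G" and lc: "lc \<in> PiE c (locS G)"
    have fm: "fmarg G pa T (Suc k) c ob lc = (\<Sum>h\<in>hists G k. if cond ob lc h then fprobE G pa T h else 0)"
      by (simp add: fmarg_def cond_def sh_def)
    define Q where "Q = q (Suc k) c ob lc"
    have "(\<Sum>h\<in>hists G k. if cond ob lc h then Phi h else 0)
        = (\<Sum>h\<in>hists G k. if cond ob lc h then fprobE G pa T h * (\<Sum>x\<in>XX G. pk G pa t (sh h) x *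
           (W ob * - ln (pmf Q (prj c x)))) else 0)"
      by (intro sum.cong refl) (auto simp: Phi_def cond_def Q_def)
    also have "\<dots> = W ob * fmarg G pa T (Suc k) c ob lc * entropy_on (qfull G pa T (Suc k) c ob lc) (loc_triples G c)"
    proof (cases "fmarg G pa T (Suc k) c ob lc = 0")
      case True
      then have "\<forall>h\<in>hists G k. (if cond ob lc h then fprobE G pa T h else 0) = 0"
        unfolding fm using finH by (subst sum_nonneg_eq_0_iff[symmetric]) (auto simp: fprobE_nonneg)
      then have "(if cond ob lc h then fprobE G pa T h * (\<Sum>x\<in>XX G. pk G pa t (sh h) x *
           (W ob * - ln (pmf Q (prj c x)))) else 0) = 0" if "h \<in> hists G k" for h
        using that by (auto split: if_splits)
      then have "(\<Sum>h\<in>hists G k. if cond ob lc h then fprobE G pa T h * (\<Sum>x\<in>XX G. pk G pa t (sh h) x *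
           (W ob * - ln (pmf Q (prj c x)))) else 0) = 0" by (intro sum.neutral) blast
      then show ?thesis using True by (simp only: mult_0_right mult_0)
    next
      case False
      then have fpos: "fmarg G pa T (Suc k) c ob lc > 0"
      proof -
        have "fmarg G pa T (Suc k) c ob lc \<ge> 0" unfolding fm by (intro sum_nonneg) (simp add: fprobE_nonneg)
        then show ?thesis using False by simp
      qed
      have Qeq: "pmf Q y = qfull G pa T (Suc k) c ob lc y" for y
      proof -
        have "Suc k \<ge> 1" by simp
        then show ?thesis using adm c ob lc fpos unfolding q_admissible_def Q_def by blast
      qed
      define F where "F y = W ob * - ln (pmf Q y)" for y
      have "(\<Sum>h\<in>hists G k. if cond ob lc h then fprobE G pa T h * (\<Sum>x\<in>XX G. pk G pa t (sh h) x * F (prj c x)) else 0)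
          = (\<Sum>h\<in>hists G k. \<Sum>x\<in>XX G. if cond ob lc h then fpath G pa T (s_init G) (h @ [x]) * F (prj c x) else 0)"
        by (intro sum.cong refl) (auto simp: sum_distrib_left fprobE_pk[of _ _ _ _ t, symmetric] sh_def mult.assoc)
      also have "\<dots> = (\<Sum>h'\<in>hists G (Suc k). if cond ob lc (butlast h') then fpath G pa T (s_init G) h' * F (prj c (last h')) else 0)"
        unfolding hists_lset sum_lset_Suc_snoc[OF fX] last_snoc butlast_snoc by (rule refl)
      also have "\<dots> = (\<Sum>h'\<in>hists G (Suc k). \<Sum>y\<in>loc_triples G c. if prj c (last h') = y then
            (if cond ob lc (butlast h') then fpath G pa T (s_init G) h' else 0) * F y else 0)"
      proof (intro sum.cong refl)
        fix h' assume h': "h' \<in> hists G (Suc k)"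
        then have "last h' \<in> XX G" by (cases h' rule: rev_cases) (auto simp: hists_def XX_def)
        then have "prj c (last h') \<in> loc_triples G c" using prj_in_loc_triples cA by blast
        then show "(if cond ob lc (butlast h') then fpath G pa T (s_init G) h' * F (prj c (last h')) else 0)
          = (\<Sum>y\<in>loc_triples G c. if prj c (last h') = y then
            (if cond ob lc (butlast h') then fpath G pa T (s_init G) h' else 0) * F y else 0)"
          using finite_loc_triples[OF wf cA] by (simp add: sum.delta)
      qed
      also have "\<dots> = (\<Sum>y\<in>loc_triples G c. fjoint G pa T (Suc k) c ob lc y * F y)"
        unfolding fjoint_def sum_distrib_right
        by (subst sum.swap) (intro sum.cong refl, auto simp: Let_def cond_def sh_def prj_def)
      also have "\<dots> = (\<Sum>y\<in>loc_triples G c. fmarg G pa T (Suc k) c ob lc * qfull G pa T (Suc k) c ob lc y * F y)"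
        using fpos by (intro sum.cong refl) (simp add: qfull_def)
      also have "\<dots> = W ob * fmarg G pa T (Suc k) c ob lc * entropy_on (qfull G pa T (Suc k) c ob lc) (loc_triples G c)"
        unfolding entropy_on_def F_def Qeq xlogx_eq
        by (simp add: sum_distrib_left sum_negf algebra_simps)
      finally show ?thesis unfolding F_def .
    qed
    finally show "(\<Sum>h\<in>hists G k. if cond ob lc h then Phi h else 0)
        = W ob * fmarg G pa T (Suc k) c ob lc * entropy_on (qfull G pa T (Suc k) c ob lc) (loc_triples G c)" .
  qed
  finally show ?thesis by (simp add: Phi_def sh_def)
qed

lemma pk_gfun_split:
  "pk G pa t s x * gfun G pa pc q t s x =
     pk G pa t s x * ln (pk G pa t s x)
     + (\<Sum>c\<in>comm_acts G. pk G pa t s x * (pmf (pc (fst s)) c * - ln (gq G q t s c x)))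
     + (\<Sum>i\<in>agents G. pk G pa t s x * (wprime G pc (fst s) i * - ln (gq G q t s {i} x)))"
  unfolding gfun_def by (simp add: sum_distrib_left[symmetric] sum_negf right_diff_distrib)

lemma term_ident:
  fixes G :: "('i, 'o, 'l, 'a) cmg"
  assumes wf: "cmg_wf G" and adm: "q_admissible G pa T q"
  shows "(\<Sum>h\<in>lset (XX G) k. gE (pk G pa) T 1 (s_init G) h *
       (\<Sum>x\<in>XX G. pk G pa (1 + k) (lst (s_init G) h) x * gfun G pa pc q (1 + k) (lst (s_init G) h) x))
     = (\<Sum>i\<in>agents G. Gi_term G pc pa T i (Suc k)) + (\<Sum>c\<in>comm_acts G. Gc_term G pc pa T c (Suc k))
       - Hent G pa T (Suc k)"
proof -
  define E where "E h = fprobE G pa T h" for h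
  define sh where "sh (h :: ('i, 'o, 'l, 'a) hist) = last_st (s_init G) h" for h
  define A where "A h = E h * (\<Sum>x\<in>XX G. pk G pa (Suc k) (sh h) x * ln (pk G pa (Suc k) (sh h) x))" for h
  define B where "B c h = E h * (\<Sum>x\<in>XX G. pk G pa (Suc k) (sh h) x * (pmf (pc (fst (sh h))) c * - ln (gq G q (Suc k) (sh h) c x)))" for c h
  define C where "C i h = E h * (\<Sum>x\<in>XX G. pk G pa (Suc k) (sh h) x * (wprime G pc (fst (sh h)) i * - ln (gq G q (Suc k) (sh h) {i} x)))" for i h
  have "(\<Sum>h\<in>lset (XX G) k. gE (pk G pa) T 1 (s_init G) h *
       (\<Sum>x\<in>XX G. pk G pa (1 + k) (lst (s_init G) h) x * gfun G pa pc q (1 + k) (lst (s_init G) h) x))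
     = (\<Sum>h\<in>hists G k. A h + (\<Sum>c\<in>comm_acts G. B c h) + (\<Sum>i\<in>agents G. C i h))"
  proof (intro sum.cong)
    show "lset (XX G) k = hists G k" by (simp add: hists_lset)
  next
    fix h
    have "gE (pk G pa) T 1 (s_init G) h = E h" by (simp add: E_def fprobE_gE[of _ _ _ _ 1])
    moreover have "lst (s_init G) h = sh h" by (simp add: sh_def last_st_lst)
    ultimately show "gE (pk G pa) T 1 (s_init G) h *
       (\<Sum>x\<in>XX G. pk G pa (1 + k) (lst (s_init G) h) x * gfun G pa pc q (1 + k) (lst (s_init G) h) x)
       = A h + (\<Sum>c\<in>comm_acts G. B c h) + (\<Sum>i\<in>agents G. C i h)"
      unfolding A_def B_def C_def
      by (simp add: pk_gfun_split sum.distrib sum_distrib_left distrib_left sum.swap[of _ "XX G"])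
  qed
  also have "\<dots> = (\<Sum>h\<in>hists G k. A h) + (\<Sum>c\<in>comm_acts G. \<Sum>h\<in>hists G k. B c h) + (\<Sum>i\<in>agents G. \<Sum>h\<in>hists G k. C i h)"
    by (simp add: sum.distrib sum.swap[of _ "hists G k"])
  also have "(\<Sum>h\<in>hists G k. A h) = - Hent G pa T (Suc k)"
    unfolding A_def E_def sh_def by (rule hent_term[OF wf])
  also have "(\<Sum>c\<in>comm_acts G. \<Sum>h\<in>hists G k. B c h) = (\<Sum>c\<in>comm_acts G. Gc_term G pc pa T c (Suc k))"
  proof (intro sum.cong refl)
    fix c assume c: "c \<in> comm_acts G"
    show "(\<Sum>h\<in>hists G k. B c h) = Gc_term G pc pa T c (Suc k)"
      unfolding B_def E_def sh_def Gc_term_def gq_def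
      using key_term[OF wf adm, where c=c and k=k and t="Suc k" and W="\<lambda>ob. pmf (pc ob) c"] c by simp
  qed
  also have "(\<Sum>i\<in>agents G. \<Sum>h\<in>hists G k. C i h) = (\<Sum>i\<in>agents G. Gi_term G pc pa T i (Suc k))"
  proof (intro sum.cong refl)
    fix i assume i: "i \<in> agents G"
    show "(\<Sum>h\<in>hists G k. C i h) = Gi_term G pc pa T i (Suc k)"
      unfolding C_def E_def sh_def Gi_term_def gq_def
      using key_term[OF wf adm, where c="{i}" and k=k and t="Suc k" and W="\<lambda>ob. wprime G pc ob i"] i by simp
  qed
  finally show ?thesis by simp
qed

lemma fmarg_nonneg: "fmarg G pa T t c ob lc \<ge> 0"
  unfolding fmarg_def by (intro sum_nonneg) (simp add: fprobE_nonneg)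

lemma ent_term_nonneg:
  assumes adm: "q_admissible G pa T q" and c: "c \<in> comm_acts G \<or> (\<exists>i\<in>agents G. c = {i})"
    and t: "t \<ge> 1" and ob: "ob \<in> pubs G" and lc: "lc \<in> PiE c (locS G)" and W: "W \<ge> 0"
  shows "W * fmarg G pa T t c ob lc * entropy_on (qfull G pa T t c ob lc) (loc_triples G c) \<ge> 0"
proof (cases "fmarg G pa T t c ob lc = 0")
  case True then show ?thesis by simp
next
  case False
  then have fpos: "fmarg G pa T t c ob lc > 0" using fmarg_nonneg[of G pa T t c ob lc] by simp
  have Qeq: "pmf (q t c ob lc) y = qfull G pa T t c ob lc y" for y
    using adm c ob lc fpos t unfolding q_admissible_def by blast
  have "xlogx (qfull G pa T t c ob lc y) \<le> 0" for y
  proof -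
    define p where "p = pmf (q t c ob lc) y"
    have p0: "p \<ge> 0" and p1: "p \<le> 1" by (simp_all add: p_def pmf_le_1)
    have "p * ln p \<le> 0"
    proof (cases "p = 0")
      case False
      then have "ln p \<le> 0" using p0 p1 by simp
      then show ?thesis using p0 by (simp add: mult_nonneg_nonpos)
    qed simp
    then show ?thesis by (simp add: Qeq[symmetric] p_def xlogx_eq)
  qed
  then have "entropy_on (qfull G pa T t c ob lc) (loc_triples G c) \<ge> 0"
    unfolding entropy_on_def by (simp add: sum_nonpos)
  then show ?thesis using W fmarg_nonneg[of G pa T t c ob lc] by simp
qed

lemma wprime_nonneg: "wprime G pc ob i \<ge> 0"
  by (simp add: wprime_def sum_nonneg)

lemma Gi_term_nonneg:
  assumes adm: "q_admissible G pa T q" and i: "i \<in> agents G" and t: "t \<ge> 1"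
  shows "Gi_term G pc pa T i t \<ge> 0"
  unfolding Gi_term_def
  by (intro sum_nonneg ent_term_nonneg[OF adm] wprime_nonneg) (use i t in auto)

lemma Gc_term_nonneg:
  assumes adm: "q_admissible G pa T q" and c: "c \<in> comm_acts G" and t: "t \<ge> 1"
  shows "Gc_term G pc pa T c t \<ge> 0"
  unfolding Gc_term_def
  by (intro sum_nonneg ent_term_nonneg[OF adm]) (use c t in auto)

theorem theorem1:
  fixes G :: "('i, 'o, 'l, 'a) cmg"
    and pc :: "('i \<Rightarrow> 'o) \<Rightarrow> 'i set pmf"
    and pa :: "('i, 'o, 'l) jstate \<Rightarrow> ('i \<Rightarrow> 'a) pmf"
    and St Sa :: "('i, 'o, 'l) jstate set"
    and q :: "nat \<Rightarrow> 'i set \<Rightarrow> ('i \<Rightarrow> 'o) \<Rightarrow> ('i \<Rightarrow> 'l) \<Rightarrow> (('i \<Rightarrow> 'a) \<times> ('i \<Rightarrow> 'o) \<times> ('i \<Rightarrow> 'l)) pmf"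
  assumes "cmg_wf G"
    and "reach_avoid_obj G St Sa"
    and "pos_comm_policy G pc"
    and "pos_act_policy G pa"
    and "q_admissible G pa (St \<union> Sa) q"
    and "summable (\<lambda>t. Hent G pa (St \<union> Sa) (Suc t))"
  shows "until_prob G (fpath G pa (St \<union> Sa) (s_init G)) St
         - until_prob G (rpath G pc q (St \<union> Sa) 1 (s_init G)) St
         \<le> (if Dcost G pc pa (St \<union> Sa) = \<infinity> then 1
            else sqrt (1 - exp (- real_of_ereal (Dcost G pc pa (St \<union> Sa)))))"
proof -
  note wf = assms(1) and pcp = assms(3) and pap = assms(4) and adm = assms(5) and Hsum = assms(6)
  define T where "T = St \<union> Sa"
  define X where "X = XX G"
  define s0 where "s0 = s_init G"
  have fX: "finite X" unfolding X_def by (rule finite_XX[OF wf])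
  have s0J: "s0 \<in> jstates G" unfolding s0_def by (rule s_init_jstates[OF wf])
  have StT: "St \<subseteq> T" by (simp add: T_def)
  define a where "a k = (\<Sum>h\<in>hists G k. if last_st s0 h \<in> St then fpath G pa T s0 h else 0)" for k
  define b where "b k = (\<Sum>h\<in>hists G k. if last_st s0 h \<in> St then rpath G pc q T 1 s0 h else 0)" for k
  define P where "P n h = stopw (pk G pa) T n 1 s0 h" for n h
  define Q where "Q n h = stopw (rk G pc q) T n 1 s0 h" for n h
  define K where "K n = Kf (pk G pa) (gfun G pa pc q) T X n 1 s0" for n
  have UP: "until_prob G (fpath G pa T (s_init G)) St = suminf a"
    unfolding until_prob_def a_def[abs_def] s0_def by (rule refl)
  have UQ: "until_prob G (rpath G pc q T 1 (s_init G)) St = suminf b"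
    unfolding until_prob_def b_def[abs_def] s0_def by (rule refl)
  have pa_part: "(\<Sum>k<Suc n. a k) = (\<Sum>h\<in>Hs X n. if lst s0 h \<in> St then P n h else 0)" for n
    unfolding a_def P_def hists_lset last_st_lst fpath_gpath[of _ _ _ _ _ 1] X_def[symmetric]
    by (rule until_partial[OF fX StT])
  have pb_part: "(\<Sum>k<Suc n. b k) = (\<Sum>h\<in>Hs X n. if lst s0 h \<in> St then Q n h else 0)" for n
    unfolding b_def Q_def hists_lset last_st_lst rpath_gpath X_def[symmetric]
    by (rule until_partial[OF fX StT])
  have Pnn: "P n h \<ge> 0" for n h unfolding P_def by (rule stopw_nonneg) (rule pk_nonneg)
  have Qnn: "Q n h \<ge> 0" for n h unfolding Q_def by (rule stopw_nonneg) (rule rk_nonneg)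
  have P1: "(\<Sum>h\<in>Hs X n. P n h) = 1" for n
    unfolding P_def
  proof (rule sum_stopw_eq[where S="jstates G"])
    show "\<And>t s x. 0 \<le> pk G pa t s x" by (rule pk_nonneg)
    show "\<And>x. x \<in> X \<Longrightarrow> snd x \<in> jstates G" unfolding X_def by (rule XX_snd)
    show "\<And>t s. s \<in> jstates G \<Longrightarrow> s \<notin> T \<Longrightarrow> (\<Sum>x\<in>X. pk G pa t s x) = 1"
      unfolding X_def using sum_pk[OF wf pap] by blast
  qed (use fX s0J in auto)
  have Q1: "(\<Sum>h\<in>Hs X n. Q n h) \<le> 1" for n
    unfolding Q_def
  proof (rule sum_stopw_le[where S="jstates G"])
    show "\<And>t s x. 0 \<le> rk G pc q t s x" by (rule rk_nonneg)
    show "\<And>x. x \<in> X \<Longrightarrow> snd x \<in> jstates G" unfolding X_def by (rule XX_snd)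
    show "\<And>t s. s \<in> jstates G \<Longrightarrow> s \<notin> T \<Longrightarrow> (\<Sum>x\<in>X. rk G pc q t s x) \<le> 1"
      unfolding X_def using sum_rk[OF wf] by blast
  qed (use fX s0J in auto)
  have ann: "a k \<ge> 0" for k unfolding a_def by (intro sum_nonneg) (simp add: fpath_nonneg)
  have bnn: "b k \<ge> 0" for k unfolding b_def rpath_gpath
    by (intro sum_nonneg) (simp add: gpath_nonneg rk_nonneg)
  have apart: "(\<Sum>k<n. a k) \<le> 1" for n
  proof (cases n)
    case (Suc m)
    have "(\<Sum>h\<in>Hs X m. if lst s0 h \<in> St then P m h else 0) \<le> (\<Sum>h\<in>Hs X m. P m h)"
      by (intro sum_mono) (simp add: Pnn)
    then show ?thesis using pa_part[of m] P1[of m] Suc by simp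
  qed simp
  have bpart: "(\<Sum>k<n. b k) \<le> 1" for n
  proof (cases n)
    case (Suc m)
    have "(\<Sum>h\<in>Hs X m. if lst s0 h \<in> St then Q m h else 0) \<le> (\<Sum>h\<in>Hs X m. Q m h)"
      by (intro sum_mono) (simp add: Qnn)
    then show ?thesis using pb_part[of m] Q1[of m] Suc by simp
  qed simp
  have sa: "summable a" by (rule summableI_nonneg_bounded[OF ann apart])
  have sb: "summable b" by (rule summableI_nonneg_bounded[OF bnn bpart])
  have BH: "(\<Sum>k<Suc n. a k) - (\<Sum>k<Suc n. b k) \<le> sqrt (1 - exp (- K n))" for n
  proof -
    define B where "B = (\<Sum>h\<in>Hs X n. sqrt (P n h * Q n h))"
    have "(\<Sum>k<Suc n. a k) - (\<Sum>k<Suc n. b k) \<le> sqrt (1 - B\<^sup>2)"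
      unfolding pa_part pb_part B_def
      by (rule bh_flat) (use finite_Hs[OF fX] Pnn Qnn P1[of n] Q1[of n] in auto)
    also have "exp (- K n / 2) \<le> B"
      unfolding B_def P_def Q_def K_def
    proof (rule bhat_bound[where S="jstates G" and good="goodp G pa T"])
      show "\<And>t s x. 0 \<le> pk G pa t s x" by (rule pk_nonneg)
      show "\<And>t s x. 0 \<le> rk G pc q t s x" by (rule rk_nonneg)
      show "\<And>x. x \<in> X \<Longrightarrow> snd x \<in> jstates G" unfolding X_def by (rule XX_snd)
      show "\<And>t s. s \<in> jstates G \<Longrightarrow> s \<notin> T \<Longrightarrow> (\<Sum>x\<in>X. pk G pa t s x) = 1"
        unfolding X_def using sum_pk[OF wf pap] by blast
      show "\<And>t s. goodp G pa T t s \<Longrightarrow> s \<in> jstates G" using good_jstates[OF wf] by blast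
      show "\<And>t s x. goodp G pa T t s \<Longrightarrow> s \<notin> T \<Longrightarrow> x \<in> X \<Longrightarrow> 0 < pk G pa t s x \<Longrightarrow>
          (snd x \<in> T \<or> goodp G pa T (Suc t) (snd x)) \<and> pk G pa t s x * exp (- gfun G pa pc q t s x) \<le> rk G pc q t s x"
        unfolding X_def using good_step amgm_step[OF wf adm[folded T_def] pcp] by blast
      show "s0 \<in> T \<or> goodp G pa T 1 s0" unfolding s0_def using good_init by blast
    qed (rule fX)
    then have "exp (- K n) \<le> B\<^sup>2"
    proof -
      assume e: "exp (- K n / 2) \<le> B"
      have "exp (- K n) = (exp (- K n / 2))\<^sup>2" by (simp add: power2_eq_square exp_add[symmetric])
      also have "\<dots> \<le> B\<^sup>2" using e by (intro power_mono) auto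
      finally show ?thesis .
    qed
    then have "sqrt (1 - B\<^sup>2) \<le> sqrt (1 - exp (- K n))" by simp
    finally show ?thesis .
  qed
  define GI where "GI i t = Gi_term G pc pa T i (Suc t)" for i t
  define GC where "GC c t = Gc_term G pc pa T c (Suc t)" for c t
  define HH where "HH t = Hent G pa T (Suc t)" for t
  have Kn: "K n = (\<Sum>k<n. (\<Sum>i\<in>agents G. GI i k) + (\<Sum>c\<in>comm_acts G. GC c k) - HH k)" for n
  proof -
    have "K n = (\<Sum>k<n. \<Sum>h\<in>lset X k. gE (pk G pa) T 1 s0 h *
      (\<Sum>x\<in>X. pk G pa (1 + k) (lst s0 h) x * gfun G pa pc q (1 + k) (lst s0 h) x))"
      unfolding K_def by (rule Kf_unroll[OF fX])
    also have "\<dots> = (\<Sum>k<n. (\<Sum>i\<in>agents G. GI i k) + (\<Sum>c\<in>comm_acts G. GC c k) - HH k)"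
      unfolding X_def s0_def GI_def GC_def HH_def
      by (intro sum.cong refl term_ident[OF wf adm[folded T_def]])
    finally show ?thesis .
  qed
  show ?thesis
  proof (cases "Dcost G pc pa (St \<union> Sa) = \<infinity>")
    case True
    have "suminf a \<le> 1" by (rule suminf_le_const[OF sa apart])
    moreover have "suminf b \<ge> 0" by (rule suminf_nonneg[OF sb bnn])
    ultimately show ?thesis using True UP UQ by (simp add: T_def)
  next
    case False
    have fA: "finite (agents G)" using wf by (simp add: cmg_wf_def)
    have fC: "finite (comm_acts G)" by (rule finite_comm_acts[OF wf])
    have GInn: "GI i t \<ge> 0" if "i \<in> agents G" for i t
      unfolding GI_def by (rule Gi_term_nonneg[OF adm[folded T_def] that]) simp
    have GCnn: "GC c t \<ge> 0" if "c \<in> comm_acts G" for c t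
      unfolding GC_def by (rule Gc_term_nonneg[OF adm[folded T_def] that]) simp
    define SI where "SI = (\<Sum>i\<in>agents G. Gi G pc pa T i)"
    define SC where "SC = (\<Sum>c\<in>comm_acts G. Gc G pc pa T c)"
    have D: "Dcost G pc pa T = enn2ereal (SI + SC) - ereal (suminf HH)"
      unfolding Dcost_def SI_def SC_def HH_def[abs_def] by (rule refl)
    have "SI + SC \<noteq> top"
    proof
      assume tp: "SI + SC = top"
      have "Dcost G pc pa T = \<infinity>" unfolding D tp enn2ereal_top by simp
      then show False using False by (simp add: T_def)
    qed
    then have SI: "SI \<noteq> top" and SC: "SC \<noteq> top" by simp_all
    have sGI: "summable (GI i)" and eGI: "Gi G pc pa T i = ennreal (suminf (GI i))" if i: "i \<in> agents G" for i
    proof -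
      have "Gi G pc pa T i \<le> SI" unfolding SI_def by (rule member_le_sum[OF i]) (use fA in auto)
      then have "Gi G pc pa T i \<noteq> top" using SI by (auto simp: top_unique)
      then show sGI: "summable (GI i)" unfolding Gi_def GI_def[symmetric]
        by (intro summable_suminf_not_top) (use GInn[OF i] in auto)
      show "Gi G pc pa T i = ennreal (suminf (GI i))" unfolding Gi_def GI_def[symmetric]
        by (rule suminf_ennreal2) (use GInn[OF i] sGI in auto)
    qed
    have sGC: "summable (GC c)" and eGC: "Gc G pc pa T c = ennreal (suminf (GC c))" if c: "c \<in> comm_acts G" for c
    proof -
      have "Gc G pc pa T c \<le> SC" unfolding SC_def by (rule member_le_sum[OF c]) (use fC in auto)
      then have "Gc G pc pa T c \<noteq> top" using SC by (auto simp: top_unique)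
      then show sGC: "summable (GC c)" unfolding Gc_def GC_def[symmetric]
        by (intro summable_suminf_not_top) (use GCnn[OF c] in auto)
      show "Gc G pc pa T c = ennreal (suminf (GC c))" unfolding Gc_def GC_def[symmetric]
        by (rule suminf_ennreal2) (use GCnn[OF c] sGC in auto)
    qed
    define XI where "XI = (\<Sum>i\<in>agents G. suminf (GI i))"
    define XC where "XC = (\<Sum>c\<in>comm_acts G. suminf (GC c))"
    have XI0: "XI \<ge> 0" unfolding XI_def by (intro sum_nonneg suminf_nonneg sGI GInn) auto
    have XC0: "XC \<ge> 0" unfolding XC_def by (intro sum_nonneg suminf_nonneg sGC GCnn) auto
    have "SI = ennreal XI" unfolding SI_def XI_def
      using eGI GInn sGI by (simp add: suminf_nonneg)
    moreover have "SC = ennreal XC" unfolding SC_def XC_def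
      using eGC GCnn sGC by (simp add: suminf_nonneg)
    ultimately have sum_eq: "SI + SC = ennreal (XI + XC)" using XI0 XC0 by simp
    have e: "enn2ereal (SI + SC) = ereal (XI + XC)"
      unfolding sum_eq using XI0 XC0 by (subst enn2ereal_ennreal) auto
    have Dr: "Dcost G pc pa T = ereal (XI + XC - suminf HH)"
      unfolding D e by simp
    have sHH: "summable HH" using Hsum unfolding HH_def[abs_def] T_def .
    have KL: "K \<longlonglongrightarrow> XI + XC - suminf HH"
    proof -
      have "K = (\<lambda>n. (\<Sum>i\<in>agents G. \<Sum>k<n. GI i k) + (\<Sum>c\<in>comm_acts G. \<Sum>k<n. GC c k) - (\<Sum>k<n. HH k))"
        unfolding Kn by (intro ext) (simp add: sum.distrib sum_subtractf sum.swap[of _ "{..<_}"])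
      also have "\<dots> \<longlonglongrightarrow> XI + XC - suminf HH"
        unfolding XI_def XC_def
        by (intro tendsto_diff tendsto_add tendsto_sum summable_LIMSEQ sHH sGI sGC)
      finally show ?thesis .
    qed
    have L1: "(\<lambda>n. (\<Sum>k<Suc n. a k) - (\<Sum>k<Suc n. b k)) \<longlonglongrightarrow> suminf a - suminf b"
      by (intro tendsto_diff LIMSEQ_Suc summable_LIMSEQ sa sb)
    have L2: "(\<lambda>n. sqrt (1 - exp (- K n))) \<longlonglongrightarrow> sqrt (1 - exp (- (XI + XC - suminf HH)))"
      by (intro tendsto_intros KL)
    have "suminf a - suminf b \<le> sqrt (1 - exp (- (XI + XC - suminf HH)))"
      by (rule LIMSEQ_le[OF L1 L2]) (use BH in auto)
    then show ?thesis using False UP UQ Dr by (simp add: T_def)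
  qed
qed

end
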